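(* Let $K\ge1$, $N$ and $s$ be integers with $0\le s<N-2$ and $s$ independent of $N$, let $X_0,\dots,X_{K-1}\in\mathbb{R}$, and let $f:\mathbb{R}\to\mathbb{R}$ be continuous. Let $\alpha_i=\cos\frac{(2i+1)\pi}{2K}$, $i=0,\dots,K-1$, and define $$u(z)=\sum_{i=0}^{K-1}\frac{(-1)^i/(z-\alpha_i)}{\sum_{j=0}^{K-1}(-1)^j/(z-\alpha_j)}X_i,$$ (extended continuously by $u(\alpha_i)=X_i$) and $g(z)=f(u(z))$ for $z\in[-1,1]$. Let $\mathcal{F}\subset\{0,\dots,N\}$ with $|\mathcal{F}|=N+1-s$, let $n=N-s$, and let $z_0>z_1>\dots>z_n$ be the points $\{\cos\frac{j\pi}{N}: j\in\mathcal{F}\}$. Define Berrut's interpolant $$r_{\mathcal F}(z)=\sum_{i=0}^{n}\frac{(-1)^i/(z-z_i)}{\sum_{j=0}^n(-1)^j/(z-z_j)}\,g(z_i).$$ Then $$\max_{z\in[-1,1]}|r_{\mathcal F}(z)-g(z)|\le(1+\Lambda_n)\min_{r\in\mathcal{Q}}\max_{z\in[-1,1]}|g(z)-r(z)|,$$ where $\Lambda_n$ is the Lebesgue constant of Berrut's interpolant on $\{z_j\}_{j=0}^n$, which satisfies $\Lambda_n\le\big(\frac{(s+1)(s+3)\pi^2}{4}+1\big)\big(1+\pi^2(s+1)\ln(N-s)\big)$, and $\mathcal{Q}$ is the set of rational functions $r=p/q$ with $p$ a real polynomial of degree at most $n$, $q(z)=L(z)\sum_{j=0}^n\frac{(-1)^j}{z-z_j}$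 where $L(z)=\prod_{k=0}^n(z-z_k)$, and $r(z_j)=g(z_j)$ for $j=0,\dots,n$.
   Context: The Lebesgue constant of Berrut's interpolant on nodes $z_0,\dots,z_n$ is $\Lambda_n=\max_{z\in[-1,1]}\sum_{i=0}^n|\ell_i(z)|$ with $\ell_i(z)=\dfrac{(-1)^i/(z-z_i)}{\sum_{j=0}^n (-1)^j/(z-z_j)}$. (In the paper $X_i$ may be real matrices and $f$ matrix-valued; the scalar statement applies entrywise.) *)

theory Defs
  imports "HOL-Analysis.Analysis" "HOL-Computational_Algebra.Polynomial"
begin

definition berrut_basis :: "(nat \<Rightarrow> real) \<Rightarrow> nat \<Rightarrow> nat \<Rightarrow> real \<Rightarrow> real" where
  "berrut_basis x n i z =
     (if \<exists>k\<le>n. z = x k then (if z = x i then 1 else 0)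
      else ((-1) ^ i / (z - x i)) / (\<Sum>j\<le>n. (-1) ^ j / (z - x j)))"

definition berrut :: "(nat \<Rightarrow> real) \<Rightarrow> nat \<Rightarrow> (nat \<Rightarrow> real) \<Rightarrow> real \<Rightarrow> real" where
  "berrut x n y z = (\<Sum>i\<le>n. berrut_basis x n i z * y i)"

definition lebesgue_const :: "(nat \<Rightarrow> real) \<Rightarrow> nat \<Rightarrow> real" where
  "lebesgue_const x n = Sup ((\<lambda>z. \<Sum>i\<le>n. \<bar>berrut_basis x n i z\<bar>) ` {-1..1})"

text \<open>The denominator q(z) = L(z) * sum_j (-1)^j/(z - x j), written in its
polynomial form sum_j (-1)^j prod_{k<>j} (z - x k), which agrees with the
formula off the nodes and is its continuous extension at the nodes.\<close>
definition berrut_denom :: "(nat \<Rightarrow> real) \<Rightarrow> nat \<Rightarrow> real \<Rightarrow> real" where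
  "berrut_denom x n z = (\<Sum>j\<le>n. (-1) ^ j * (\<Prod>k\<in>{..n} - {j}. (z - x k)))"

end

theory Submission
  imports Defs
begin
lemma sin_minus_xcos_nonneg:
  fixes x :: real assumes "0 \<le> x" "x \<le> pi" shows "x * cos x \<le> sin x"
proof -
  have "(\<lambda>y. sin y - y * cos y) 0 \<le> (\<lambda>y. sin y - y * cos y) x"
  proof (rule DERIV_nonneg_imp_nondecreasing[OF assms(1)])
    fix y assume y: "0 \<le> y" "y \<le> x"
    show "\<exists>d. ((\<lambda>y. sin y - y * cos y) has_real_derivative d) (at y) \<and> 0 \<le> d"
      proof -
      have "((\<lambda>y. sin y - y * cos y) has_real_derivative (cos y - (1 * cos y + y * (- sin y)))) (at y)"
        by (auto intro!: derivative_eq_intros)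
      moreover have "0 \<le> cos y - (1 * cos y + y * (- sin y))"
        using y assms by (auto intro!: mult_nonneg_nonneg sin_ge_zero)
      ultimately show ?thesis by blast
      qed
  qed
  then show ?thesis by simp
qed

lemma sin_chord:
  fixes a b :: real assumes "0 < a" "a \<le> b" "b \<le> pi"
  shows "a * sin b \<le> b * sin a"
proof -
  have "(\<lambda>y. sin y / y) b \<le> (\<lambda>y. sin y / y) a"
  proof (rule DERIV_nonpos_imp_nonincreasing[OF assms(2)])
    fix y assume y: "a \<le> y" "y \<le> b"
    hence ypos: "0 < y" using assms by auto
    show "\<exists>d. ((\<lambda>y. sin y / y) has_real_derivative d) (at y) \<and> d \<le> 0"
    proof -
      have d: "((\<lambda>y. sin y / y) has_real_derivative (cos y * y - sin y * 1) / (y * y)) (at y)"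
        using ypos by (intro DERIV_divide DERIV_sin DERIV_ident) auto
      have "(cos y * y - sin y * 1) / (y * y) \<le> 0"
        using sin_minus_xcos_nonneg[of y] y assms ypos
        by (intro divide_nonpos_nonneg) (auto simp: mult.commute)
      with d show ?thesis by blast
    qed
  qed
  then show ?thesis using assms by (simp add: field_simps)
qed

lemma sin_ge_lin:
  fixes x :: real assumes "0 \<le> x" "x \<le> pi/2" shows "2 * x / pi \<le> sin x"
proof (cases "x = 0")
  case True then show ?thesis by simp
next
  case False
  have "x * sin (pi/2) \<le> (pi/2) * sin x"
    using sin_chord[of x "pi/2"] assms False by auto
  then show ?thesis by (simp add: field_simps)
qed

lemma sin_ge_lin2:
  fixes x :: real assumes "0 \<le> x" "x \<le> pi" shows "2 * min x (pi - x) / pi \<le> sin x"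
proof (cases "x \<le> pi/2")
  case True then show ?thesis using sin_ge_lin[of x] assms
    by (auto simp: min_def divide_right_mono)
next
  case False
  have "2 * (pi - x) / pi \<le> sin (pi - x)" using sin_ge_lin[of "pi - x"] assms False by auto
  then show ?thesis using False by (simp add: min_def)
qed

lemma sin_half_ge: fixes x :: real assumes "0 \<le> x" "x \<le> pi" shows "x / pi \<le> sin (x/2)"
  using sin_ge_lin[of "x/2"] assms by auto

lemma one_minus_cos_le: fixes x :: real shows "1 - cos x \<le> x^2/2"
proof -
  have "1 - cos x = 2 * (sin (x/2))^2" using cos_double_sin[of "x/2"] by simp
  also have "\<dots> \<le> 2 * (x/2)^2"
    using abs_sin_le_one abs_sin_x_le_abs_x[of "x/2"]
    by (intro mult_left_mono) (auto simp: power2_le_iff_abs_le abs_le_square_iff[symmetric] abs_sin_x_le_abs_x)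
  finally show ?thesis by (simp add: power2_eq_square)
qed

lemma one_minus_cos_ge: fixes x :: real assumes "0 \<le> x" "x \<le> pi" shows "2 * x^2 / pi^2 \<le> 1 - cos x"
proof -
  have "1 - cos x = 2 * (sin (x/2))^2" using cos_double_sin[of "x/2"] by simp
  moreover have "(x/pi)^2 \<le> (sin (x/2))^2"
    using sin_half_ge[OF assms] assms by (intro power_mono) auto
  ultimately show ?thesis by (simp add: power_divide)
qed

definition AS :: "(nat \<Rightarrow> real) \<Rightarrow> nat \<Rightarrow> real" where
  "AS w m = (\<Sum>i\<le>m. (-1)^i * w i)"

lemma AS_Suc: "AS w (Suc m) = w 0 - AS (\<lambda>i. w (Suc i)) m"
  unfolding AS_def by (simp only: sum.atMost_Suc_shift) (simp add: sum_negf)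

lemma AS_0: "AS w 0 = w 0" by (simp add: AS_def)

lemma AS_bounds:
  assumes "\<And>i. i < m \<Longrightarrow> w (Suc i) \<le> w i" "\<And>i. i \<le> m \<Longrightarrow> 0 \<le> w i"
  shows "0 \<le> AS w m \<and> AS w m \<le> w 0 \<and> (0 < m \<longrightarrow> w 0 - w 1 \<le> AS w m)"
  using assms
proof (induction m arbitrary: w)
  case 0 then show ?case by (simp add: AS_0)
next
  case (Suc m)
  have IH: "0 \<le> AS (\<lambda>i. w (Suc i)) m \<and> AS (\<lambda>i. w (Suc i)) m \<le> w 1"
    using Suc.IH[of "\<lambda>i. w (Suc i)"] Suc.prems by auto
  have "w 1 \<le> w 0" using Suc.prems(1)[of 0] by simp
  then show ?case using IH by (simp add: AS_Suc)
qed

lemma sum_split_rev: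
  fixes f :: "nat \<Rightarrow> real" assumes "k \<le> n"
  shows "(\<Sum>i\<le>n. f i) = (\<Sum>j\<le>k. f (k - j)) + (\<Sum>j<n - k. f (Suc k + j))"
proof -
  have "{..n} = {..k} \<union> {Suc k..n}" using assms by auto
  hence "(\<Sum>i\<le>n. f i) = (\<Sum>i\<le>k. f i) + (\<Sum>i\<in>{Suc k..n}. f i)"
    by (simp add: sum.union_disjoint)
  moreover have "(\<Sum>i\<le>k. f i) = (\<Sum>j\<le>k. f (k - j))"
    by (rule sum.reindex_bij_witness[where i="\<lambda>j. k - j" and j="\<lambda>j. k - j"]) auto
  moreover have "(\<Sum>i\<in>{Suc k..n}. f i) = (\<Sum>j<n - k. f (Suc k + j))"
    by (rule sum.reindex_bij_witness[where i="\<lambda>j. Suc k + j" and j="\<lambda>i. i - Suc k"]) auto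
  ultimately show ?thesis by simp
qed

definition Dn :: "(nat \<Rightarrow> real) \<Rightarrow> nat \<Rightarrow> real \<Rightarrow> real" where
  "Dn x n z = (\<Sum>i\<le>n. (-1)^i / (z - x i))"

definition Num :: "(nat \<Rightarrow> real) \<Rightarrow> nat \<Rightarrow> real \<Rightarrow> real" where
  "Num x n z = (\<Sum>i\<le>n. 1 / \<bar>z - x i\<bar>)"

definition sdec :: "(nat \<Rightarrow> real) \<Rightarrow> nat \<Rightarrow> bool" where
  "sdec x n \<longleftrightarrow> (\<forall>i j. i < j \<longrightarrow> j \<le> n \<longrightarrow> x j < x i)"

lemma Dn_split:
  assumes "sdec x n" "k \<le> n" "z < x k" "k < n \<Longrightarrow> x (Suc k) < z"
  shows "(-1)^(Suc k) * Dn x n z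
     = AS (\<lambda>j. 1 / (x (k - j) - z)) k + (if k < n then AS (\<lambda>j. 1 / (z - x (Suc k + j))) (n - Suc k) else 0)"
proof -
  have "Dn x n z = (\<Sum>j\<le>k. (-1)^(k-j) / (z - x (k - j))) + (\<Sum>j<n - k. (-1)^(Suc k + j) / (z - x (Suc k + j)))"
    unfolding Dn_def by (rule sum_split_rev[OF assms(2)])
  moreover have "(-1)^(Suc k) * (\<Sum>j\<le>k. (-1)^(k-j) / (z - x (k - j))) = AS (\<lambda>j. 1 / (x (k - j) - z)) k"
    unfolding AS_def sum_distrib_left
  proof (rule sum.cong[OF refl])
    fix j assume j: "j \<in> {..k}"
    have e: "(-1::real)^(Suc k) * (-1)^(k-j) = - ((-1)^j)"
    proof -
      have "(-1::real)^(Suc k) * (-1)^(k-j) = (-1)^(Suc k + (k - j))" by (simp add: power_add)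
      also have "Suc k + (k - j) = Suc (2 * (k - j)) + j" using j by auto
      also have "(-1::real)^(Suc (2 * (k - j)) + j) = - ((-1)^j)" by (simp add: power_add power_mult)
      finally show ?thesis .
    qed
    have "(-1::real)^(Suc k) * ((-1)^(k-j) / (z - x (k - j))) = - ((-1)^j) / (z - x (k - j))"
      using e by (simp add: field_simps)
    also have "\<dots> = (-1)^j * (1 / (x (k - j) - z))"
      by (metis divide_minus_right minus_diff_eq mult_1 mult_1_right times_divide_eq_right minus_divide_left)
    finally show "(-1::real)^(Suc k) * ((-1)^(k-j) / (z - x (k - j))) = (-1)^j * (1 / (x (k - j) - z))" .
  qed
  moreover have "(-1)^(Suc k) * (\<Sum>j<n - k. (-1)^(Suc k + j) / (z - x (Suc k + j)))
      = (if k < n then AS (\<lambda>j. 1 / (z - x (Suc k + j))) (n - Suc k) else 0)"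
  proof (cases "k < n")
    case True
    have "{..<n - k} = {..n - Suc k}" using True by auto
    then show ?thesis using True unfolding AS_def sum_distrib_left
      by (auto intro!: sum.cong simp: power_add field_simps)
  next
    case False then show ?thesis using assms by simp
  qed
  ultimately show ?thesis by (simp add: distrib_left)
qed

lemma Dn_above:
  assumes "sdec x n" "x 0 < z"
  shows "Dn x n z = AS (\<lambda>j. 1 / (z - x j)) n"
  unfolding Dn_def AS_def by (auto intro!: sum.cong)

definition lamf :: "(nat \<Rightarrow> real) \<Rightarrow> nat \<Rightarrow> real \<Rightarrow> real" where
  "lamf x n z = (\<Sum>i\<le>n. \<bar>berrut_basis x n i z\<bar>)"

lemma lamf_nonneg: "0 \<le> lamf x n z" unfolding lamf_def by (auto intro: sum_nonneg)

lemma lam_off: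
  assumes "\<not> (\<exists>k\<le>n. z = x k)"
  shows "lamf x n z = Num x n z / \<bar>Dn x n z\<bar>"
proof -
  have "lamf x n z = (\<Sum>i\<le>n. (1 / \<bar>z - x i\<bar>) / \<bar>Dn x n z\<bar>)"
    unfolding lamf_def berrut_basis_def Dn_def using assms
    by (intro sum.cong) (auto simp: abs_divide power_abs abs_mult)
  then show ?thesis by (simp add: Num_def sum_divide_distrib)
qed

lemma sdec_inj: "sdec x n \<Longrightarrow> i \<le> n \<Longrightarrow> j \<le> n \<Longrightarrow> x i = x j \<Longrightarrow> i = j"
  unfolding sdec_def by (metis less_irrefl linorder_neqE_nat)

lemma lam_node:
  assumes "sdec x n" "j \<le> n" "z = x j"
  shows "lamf x n z = 1"
proof -
  have "lamf x n z = (\<Sum>i\<le>n. if i = j then 1 else 0)"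
    unfolding lamf_def berrut_basis_def using assms sdec_inj[OF assms(1)]
    by (intro sum.cong) auto
  then show ?thesis using assms by simp
qed

lemma berrut_abs_le: "\<bar>berrut x n y z\<bar> \<le> lamf x n z * (\<Sum>i\<le>n. \<bar>y i\<bar>)"
proof -
  have "\<bar>berrut x n y z\<bar> \<le> (\<Sum>i\<le>n. \<bar>berrut_basis x n i z\<bar> * \<bar>y i\<bar>)"
    unfolding berrut_def by (rule order_trans[OF sum_abs]) (simp add: abs_mult)
  also have "\<dots> \<le> (\<Sum>i\<le>n. \<bar>berrut_basis x n i z\<bar> * (\<Sum>j\<le>n. \<bar>y j\<bar>))"
    by (intro sum_mono mult_left_mono) (auto intro: member_le_sum)
  finally show ?thesis by (simp add: lamf_def sum_distrib_right)
qed

definition reflx :: "(nat \<Rightarrow> real) \<Rightarrow> nat \<Rightarrow> nat \<Rightarrow> real" where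
  "reflx x n i = - x (n - i)"

lemma sum_reflect: "(\<Sum>i\<le>(n::nat). f (n - i)) = (\<Sum>i\<le>n. (f i :: real))"
  by (rule sum.reindex_bij_witness[where i="\<lambda>j. n - j" and j="\<lambda>j. n - j"]) (auto simp: diff_diff_cancel)

lemma div_swap: "(a::real) / (b - c) = - (a / (c - b))"
  by (metis divide_minus_right minus_diff_eq)

lemma basis_reflx:
  assumes "i \<le> n"
  shows "berrut_basis (reflx x n) n i (-z) = berrut_basis x n (n - i) z"
proof -
  have node: "(\<exists>k\<le>n. -z = reflx x n k) \<longleftrightarrow> (\<exists>k\<le>n. z = x k)"
    unfolding reflx_def by (metis diff_diff_cancel diff_le_self minus_equation_iff)
  show ?thesis
  proof (cases "\<exists>k\<le>n. z = x k")
    case True then show ?thesis using node unfolding berrut_basis_def reflx_def by auto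
  next
    case False
    have pw: "\<And>j. j \<le> n \<Longrightarrow> (-1::real)^(n - j) = (-1)^n * (-1)^j"
    proof -
      fix j :: nat assume "j \<le> n"
      hence "(-1::real)^n = (-1)^(n-j) * (-1)^j" by (simp flip: power_add)
      hence "(-1::real)^n * (-1)^j = (-1)^(n-j) * ((-1)^j * (-1)^j)" by simp
      also have "(-1::real)^j * (-1)^j = 1" by (simp flip: power_add add: power_mult[symmetric] mult_2[symmetric])
      finally show "(-1::real)^(n - j) = (-1)^n * (-1)^j" by simp
    qed
    have den: "(\<Sum>j\<le>n. (-1)^j / (- z - reflx x n j)) = - ((-1)^n * (\<Sum>j\<le>n. (-1)^j / (z - x j)))"
    proof -
      have "(\<Sum>j\<le>n. (-1)^j / (- z - reflx x n j)) = (\<Sum>j\<le>n. - ((-1)^(n - (n - j)) / (z - x (n - j))))"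
        unfolding reflx_def by (intro sum.cong refl) (auto intro: div_swap)
      also have "\<dots> = (\<Sum>j\<le>n. - ((-1)^(n - j) / (z - x j)))"
        by (rule sum_reflect[where f="\<lambda>j. - ((-1)^(n - j) / (z - x j))"])
      also have "\<dots> = (\<Sum>j\<le>n. - ((-1)^n * ((-1)^j / (z - x j))))"
        by (intro sum.cong refl) (simp add: pw)
      finally show ?thesis by (simp add: sum_negf sum_distrib_left)
    qed
    have num: "(-1)^i / (- z - reflx x n i) = - ((-1)^n * ((-1)^(n-i) / (z - x (n - i))))"
      unfolding reflx_def using pw[of "n - i"] assms by (auto intro: div_swap)
    have "(-1::real)^n \<noteq> 0" by simp
    then show ?thesis using False node unfolding berrut_basis_def
      by (auto simp add: den num)
  qed
qed

lemma lamf_reflx: "lamf (reflx x n) n (-z) = lamf x n z"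
proof -
  have "lamf (reflx x n) n (-z) = (\<Sum>i\<le>n. \<bar>berrut_basis x n (n - i) z\<bar>)"
    unfolding lamf_def by (intro sum.cong) (auto simp: basis_reflx)
  also have "\<dots> = lamf x n z" unfolding lamf_def by (rule sum_reflect)
  finally show ?thesis .
qed

lemma AS_ge_frac:
  assumes "\<And>i. i < m \<Longrightarrow> w (Suc i) \<le> w i" "\<And>i. i \<le> m \<Longrightarrow> 0 \<le> w i"
    and "0 < m \<Longrightarrow> c * w 0 \<le> w 0 - w 1" "c \<le> 1"
  shows "c * w 0 \<le> AS w m"
proof (cases "m = 0")
  case True
  have "0 \<le> w 0" using assms(2)[of 0] by simp
  then show ?thesis using True assms(4) by (simp add: AS_0) (metis mult_1 mult_right_mono)
next
  case False
  then show ?thesis using AS_bounds[of m w, OF assms(1,2)] assms(3) by auto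
qed

lemma sdec_le: "sdec x n \<Longrightarrow> i \<le> j \<Longrightarrow> j \<le> n \<Longrightarrow> x j \<le> x i"
  unfolding sdec_def by (metis le_less order_refl)

lemma above_seq:
  assumes "sdec x n" "k \<le> n" "z < x k"
  shows "\<And>j. j < k \<Longrightarrow> 1 / (x (k - Suc j) - z) \<le> 1 / (x (k - j) - z)"
    and "\<And>j. j \<le> k \<Longrightarrow> 0 \<le> 1 / (x (k - j) - z)"
proof -
  fix j assume j: "j < k"
  have "x (k - j) < x (k - Suc j)" using assms(1,2) j unfolding sdec_def by auto
  moreover have "x k \<le> x (k - j)" using assms(1,2) j unfolding sdec_def
    by (cases "j = 0") (auto simp: less_imp_le)
  ultimately show "1 / (x (k - Suc j) - z) \<le> 1 / (x (k - j) - z)"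
    using assms(3) by (intro divide_left_mono) auto
next
  fix j assume j: "j \<le> k"
  have "x k \<le> x (k - j)" using assms(1,2) j unfolding sdec_def
    by (cases "j = 0") (auto simp: less_imp_le)
  then show "0 \<le> 1 / (x (k - j) - z)" using assms(3) by auto
qed

lemma below_seq:
  assumes "sdec x n" "k < n" "x (Suc k) < z"
  shows "\<And>j. j < n - Suc k \<Longrightarrow> 1 / (z - x (Suc k + Suc j)) \<le> 1 / (z - x (Suc k + j))"
    and "\<And>j. j \<le> n - Suc k \<Longrightarrow> 0 \<le> 1 / (z - x (Suc k + j))"
proof -
  fix j assume j: "j < n - Suc k"
  have "x (Suc k + Suc j) < x (Suc k + j)" using assms(1,2) j unfolding sdec_def by auto
  moreover have "x (Suc k + j) \<le> x (Suc k)" using assms(1,2) j by (intro sdec_le[of x n]) auto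
  ultimately show "1 / (z - x (Suc k + Suc j)) \<le> 1 / (z - x (Suc k + j))"
    using assms(3) by (intro divide_left_mono) auto
next
  fix j assume j: "j \<le> n - Suc k"
  have "x (Suc k + j) \<le> x (Suc k)" using assms(1,2) j by (intro sdec_le[of x n]) auto
  then show "0 \<le> 1 / (z - x (Suc k + j))" using assms(3) by auto
qed

lemma Dn_abs_split:
  assumes "sdec x n" "k \<le> n" "z < x k" "k < n \<Longrightarrow> x (Suc k) < z"
  shows "\<bar>Dn x n z\<bar> = AS (\<lambda>j. 1 / (x (k - j) - z)) k + (if k < n then AS (\<lambda>j. 1 / (z - x (Suc k + j))) (n - Suc k) else 0)"
    and "0 \<le> AS (\<lambda>j. 1 / (x (k - j) - z)) k"
    and "k < n \<Longrightarrow> 0 \<le> AS (\<lambda>j. 1 / (z - x (Suc k + j))) (n - Suc k)"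
proof -
  show a: "0 \<le> AS (\<lambda>j. 1 / (x (k - j) - z)) k"
    using AS_bounds[of k "\<lambda>j. 1 / (x (k - j) - z)"] above_seq[OF assms(1-3)] by auto
  show b: "k < n \<Longrightarrow> 0 \<le> AS (\<lambda>j. 1 / (z - x (Suc k + j))) (n - Suc k)"
    using AS_bounds[of "n - Suc k" "\<lambda>j. 1 / (z - x (Suc k + j))"] below_seq[OF assms(1)] assms(4) by auto
  have "\<bar>Dn x n z\<bar> = \<bar>(-1)^(Suc k) * Dn x n z\<bar>" by (simp add: abs_mult)
  also have "\<dots> = \<bar>AS (\<lambda>j. 1 / (x (k - j) - z)) k + (if k < n then AS (\<lambda>j. 1 / (z - x (Suc k + j))) (n - Suc k) else 0)\<bar>"
    by (simp only: Dn_split[OF assms])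
  finally show "\<bar>Dn x n z\<bar> = AS (\<lambda>j. 1 / (x (k - j) - z)) k + (if k < n then AS (\<lambda>j. 1 / (z - x (Suc k + j))) (n - Suc k) else 0)"
    using a b by auto
qed

lemma find_interval:
  assumes "sdec x n" "z < x 0" "\<not> (\<exists>k\<le>n. z = x k)"
  obtains k where "k \<le> n" "z < x k" "k < n \<Longrightarrow> x (Suc k) < z"
proof -
  define S where "S = {i. i \<le> n \<and> z < x i}"
  have fin: "finite S" unfolding S_def by auto
  have ne: "0 \<in> S" using assms unfolding S_def by auto
  define k where "k = Max S"
  have kS: "k \<in> S" unfolding k_def using fin ne by (intro Max_in) auto
  have "k < n \<Longrightarrow> x (Suc k) < z"
  proof -
    assume kn: "k < n"
    have "Suc k \<notin> S" using Max_ge[OF fin, of "Suc k"] unfolding k_def by auto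
    hence "x (Suc k) \<le> z" using kn unfolding S_def by auto
    moreover have "x (Suc k) \<noteq> z" using assms(3) kn by (metis Suc_leI)
    ultimately show ?thesis by auto
  qed
  then show ?thesis using that kS unfolding S_def by auto
qed

lemma lam_crude:
  assumes sd: "sdec x n" and rng: "\<And>i. i \<le> n \<Longrightarrow> -1 \<le> x i \<and> x i \<le> 1"
    and h: "0 < h" "h \<le> 2" and gap: "\<And>i. i < n \<Longrightarrow> h \<le> x i - x (Suc i)"
    and z: "-1 \<le> z" "z \<le> 1"
  shows "lamf x n z \<le> 2 * (real n + 1) / h"
proof (cases "\<exists>k\<le>n. z = x k")
  case True
  then obtain j where "j \<le> n" "z = x j" by auto
  then have "lamf x n z = 1" using lam_node[OF sd] by auto
  moreover have "1 \<le> 2 * (real n + 1) / h" using h by (simp add: field_simps)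
  ultimately show ?thesis by simp
next
  case False
  note off = lam_off[OF False]
  have xle: "\<And>i j. i \<le> j \<Longrightarrow> j \<le> n \<Longrightarrow> x j \<le> x i"
    using sd unfolding sdec_def by (metis le_less order_refl)
  show ?thesis
  proof (cases "x 0 < z")
    case True
    define v where "v = (\<lambda>j. 1 / (z - x j))"
    have v0: "0 < v 0" using True by (simp add: v_def)
    have dec: "\<And>i. i < n \<Longrightarrow> v (Suc i) \<le> v i"
    proof -
      fix i assume i: "i < n"
      have "x (Suc i) \<le> x i" "x i \<le> x 0" using xle i by auto
      then show "v (Suc i) \<le> v i" unfolding v_def using True
        by (intro divide_left_mono) (auto intro: mult_pos_pos)
    qed
    have nn: "\<And>i. i \<le> n \<Longrightarrow> 0 \<le> v i"
    proof -
      fix i assume "i \<le> n"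
      then have "x i \<le> x 0" using xle by auto
      then show "0 \<le> v i" unfolding v_def using True by auto
    qed
    have fr: "0 < n \<Longrightarrow> (h/2) * v 0 \<le> v 0 - v 1"
    proof -
      assume "0 < n"
      have g: "h \<le> x 0 - x 1" using gap[of 0] \<open>0 < n\<close> by simp
      have d1: "z - x 1 \<le> 2" using z rng[of 1] \<open>0 < n\<close> by auto
      have p1: "0 < z - x 1" using True g h by auto
      have "v 0 - v 1 = (x 0 - x 1) / ((z - x 0) * (z - x 1))"
        unfolding v_def using True p1 by (simp add: field_simps)
      also have "\<dots> \<ge> h / ((z - x 0) * 2)"
        using g h True p1 d1 by (intro frac_le mult_left_mono mult_pos_pos) auto
      finally show ?thesis unfolding v_def by (simp add: field_simps)
    qed
    have Dl: "(h/2) * v 0 \<le> \<bar>Dn x n z\<bar>"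
      using AS_ge_frac[of n v "h/2", OF dec nn fr] h Dn_above[OF sd True] by (simp add: v_def)
    have Nl: "Num x n z \<le> (real n + 1) * v 0"
    proof -
      have "Num x n z \<le> (\<Sum>i\<le>n. v 0)" unfolding Num_def
      proof (rule sum_mono)
        fix i assume "i \<in> {..n}"
        hence "x i \<le> x 0" using xle by auto
        then show "1 / \<bar>z - x i\<bar> \<le> v 0" unfolding v_def using True
          by (intro divide_left_mono) auto
      qed
      then show ?thesis by (simp add: algebra_simps)
    qed
    have "lamf x n z \<le> ((real n + 1) * v 0) / ((h/2) * v 0)"
      unfolding off using Nl Dl v0 h by (intro frac_le) auto
    also have "\<dots> = 2 * (real n + 1) / h" using v0 h by (simp add: field_simps)
    finally show ?thesis .
  next
    case False2: False
    have zl: "z < x 0" using False2 False by force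
    obtain k where k: "k \<le> n" "z < x k" "k < n \<Longrightarrow> x (Suc k) < z"
      using find_interval[OF sd zl False] by blast
    note sp = Dn_abs_split[OF sd k]
    define b where "b = 1 / (x k - z)"
    define a where "a = (if k < n then 1 / (z - x (Suc k)) else 0)"
    have b0: "0 < b" using k by (simp add: b_def)
    have a0: "0 \<le> a" using k by (auto simp: a_def)
    have Ab: "(h/2) * b \<le> AS (\<lambda>j. 1 / (x (k - j) - z)) k"
    proof (rule AS_ge_frac[of k "\<lambda>j. 1 / (x (k - j) - z)" "h/2", simplified b_def[symmetric] diff_zero])
      show "h / 2 \<le> 1" using h by simp
      show "\<And>i. i < k \<Longrightarrow> 1 / (x (k - Suc i) - z) \<le> 1 / (x (k - i) - z)"
        using above_seq(1)[OF sd k(1,2)] by simp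
      show "\<And>i. i \<le> k \<Longrightarrow> 0 \<le> 1 / (x (k - i) - z)"
        using above_seq(2)[OF sd k(1,2)] by simp
      assume "0 < k"
      have g: "h \<le> x (k - 1) - x k" using gap[of "k - 1"] \<open>0 < k\<close> k by simp
      have "x (k - 1) \<le> 1" using rng[of "k - 1"] k(1) by simp
      hence d1: "x (k - 1) - z \<le> 2" using z by simp
      have p1: "0 < x (k - 1) - z" using k g h by auto
      have "1 / (x (k - 0) - z) - 1 / (x (k - 1) - z) = (x (k - 1) - x k) / ((x k - z) * (x (k - 1) - z))"
        using k p1 by (simp add: field_simps)
      also have "\<dots> \<ge> h / ((x k - z) * 2)"
        using g h k p1 d1 by (intro frac_le mult_left_mono mult_pos_pos) auto
      finally show "h / 2 * b \<le> b - 1 / (x (k - 1) - z)"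
        by (simp add: field_simps b_def)
    qed
    have Ba: "(h/2) * a \<le> (if k < n then AS (\<lambda>j. 1 / (z - x (Suc k + j))) (n - Suc k) else 0)"
    proof (cases "k < n")
      case True
      have "(h/2) * (1 / (z - x (Suc k + 0))) \<le> AS (\<lambda>j. 1 / (z - x (Suc k + j))) (n - Suc k)"
      proof (rule AS_ge_frac[of "n - Suc k" "\<lambda>j. 1 / (z - x (Suc k + j))" "h/2"])
        show "h / 2 \<le> 1" using h by simp
        show "\<And>i. i < n - Suc k \<Longrightarrow> 1 / (z - x (Suc k + Suc i)) \<le> 1 / (z - x (Suc k + i))"
          using below_seq(1)[OF sd True k(3)[OF True]] by simp
        show "\<And>i. i \<le> n - Suc k \<Longrightarrow> 0 \<le> 1 / (z - x (Suc k + i))"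
          using below_seq(2)[OF sd True k(3)[OF True]] by simp
        assume "0 < n - Suc k"
        have g: "h \<le> x (Suc k) - x (Suc (Suc k))" using gap[of "Suc k"] \<open>0 < n - Suc k\<close> by simp
        have d1: "z - x (Suc (Suc k)) \<le> 2" using z rng[of "Suc (Suc k)"] \<open>0 < n - Suc k\<close> by auto
        have p1: "0 < z - x (Suc k)" using k True by auto
        have "1 / (z - x (Suc k + 0)) - 1 / (z - x (Suc k + 1)) = (x (Suc k) - x (Suc (Suc k))) / ((z - x (Suc k)) * (z - x (Suc (Suc k))))"
          using p1 g h by (simp add: field_simps)
        also have "\<dots> \<ge> h / ((z - x (Suc k)) * 2)"
          using g h p1 d1 by (intro frac_le mult_left_mono mult_pos_pos) auto
        finally show "h / 2 * (1 / (z - x (Suc k + 0))) \<le> 1 / (z - x (Suc k + 0)) - 1 / (z - x (Suc k + 1))"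
          by (simp add: field_simps)
      qed
      then show ?thesis using True by (simp add: a_def)
    qed (simp add: a_def)
    have Dl: "(h/2) * max a b \<le> \<bar>Dn x n z\<bar>"
      using sp Ab Ba h by (auto simp: max_def)
    have Nl: "Num x n z \<le> (real n + 1) * max a b"
    proof -
      have "Num x n z \<le> (\<Sum>i\<le>n. max a b)" unfolding Num_def
      proof (rule sum_mono)
        fix i assume i: "i \<in> {..n}"
        show "1 / \<bar>z - x i\<bar> \<le> max a b"
        proof (cases "i \<le> k")
          case True
          hence "x k \<le> x i" using xle k by auto
          hence "1 / \<bar>z - x i\<bar> \<le> b" unfolding b_def using k by (intro divide_left_mono) auto
          then show ?thesis by simp
        next
          case False
          hence kn: "k < n" using i by auto
          have "x i \<le> x (Suc k)" using xle False i by auto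
          hence "1 / \<bar>z - x i\<bar> \<le> a" unfolding a_def using k kn by (auto intro!: divide_left_mono)
          then show ?thesis by simp
        qed
      qed
      then show ?thesis by (simp add: algebra_simps)
    qed
    have mp: "0 < max a b" using b0 by simp
    have "lamf x n z \<le> ((real n + 1) * max a b) / ((h/2) * max a b)"
      unfolding off using Nl Dl mp h by (intro frac_le) auto
    also have "\<dots> = 2 * (real n + 1) / h" using mp h by (simp add: field_simps)
    finally show ?thesis .
  qed
qed

lemma sin_ratio_S1:
  fixes B phi :: real
  assumes "0 \<le> B" "B < phi" "phi - B \<le> pi - phi"
  shows "(2/3) * sin ((B + phi)/2) \<le> sin phi"
proof -
  define m where "m = (B + phi)/2"
  define p where "p = phi - B"
  define w where "w = pi - phi"
  have p0: "0 < p" and pw: "p \<le> w" using assms by (auto simp: p_def w_def)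
  have mpos: "0 \<le> sin m" using assms by (intro sin_ge_zero) (auto simp: m_def)
  show ?thesis
  proof (cases "phi \<le> pi/2")
    case True
    have "sin m \<le> sin phi" using assms True by (intro sin_monotone_2pi_le) (auto simp: m_def)
    then show ?thesis using mpos by (simp add: m_def)
  next
    case False
    show ?thesis
    proof (cases "pi/2 \<le> m")
      case True
      have "m = pi - (w + p/2)" by (simp add: m_def w_def p_def field_simps)
      hence sm: "sin m = sin (w + p/2)" by simp
      have sp: "sin phi = sin w" using sin_pi_minus[of phi] by (simp add: w_def)
      have "w * sin (w + p/2) \<le> (w + p/2) * sin w"
        using sin_chord[of w "w + p/2"] p0 pw True by (simp add: m_def w_def p_def)
      moreover have "0 \<le> sin (w + p/2)" using sm mpos by simp
      moreover have "0 < w" using p0 pw by simp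
      moreover have "(w + p/2) * sin w \<le> (3/2 * w) * sin w"
        using pw p0 sp mpos sin_ge_zero[of w] assms by (intro mult_right_mono) (auto simp: w_def)
      ultimately have "w * sin (w + p/2) \<le> w * (3/2 * sin w)"
        by (metis (no_types, opaque_lifting) mult.assoc mult.commute order_trans)
      hence "sin (w + p/2) \<le> 3/2 * sin w" using \<open>0 < w\<close> by (rule mult_left_le_imp_le)
      hence "(2/3) * sin (w + p/2) \<le> sin w" by simp
      then show ?thesis using sm sp by (simp add: m_def)
    next
      case False2: False
      have w1: "w < pi/2" using False by (simp add: w_def)
      have w2: "pi/3 < w" using False2 pw by (simp add: m_def w_def p_def)
      have "2 * w / pi \<le> sin w" using sin_ge_lin[of w] w1 pw p0 by simp
      moreover have "2/3 < 2 * w / pi" using w2 by (simp add: field_simps)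
      moreover have "(2/3) * sin m \<le> 2/3" by simp
      moreover have "sin phi = sin w" by (simp add: w_def)
      ultimately have "(2/3) * sin m \<le> sin phi" by linarith
      then show ?thesis by (simp add: m_def)
    qed
  qed
qed

lemma cos_diff_le:
  fixes B phi :: real assumes "0 \<le> B" "B < phi" "phi \<le> pi"
  shows "0 < cos B - cos phi" "cos B - cos phi \<le> (phi - B) * sin ((B + phi)/2)"
proof -
  show "0 < cos B - cos phi" using cos_monotone_0_pi[of B phi] assms by simp
  have e: "cos B - cos phi = 2 * sin ((B + phi)/2) * sin ((phi - B)/2)" by (rule cos_diff_cos)
  have "0 \<le> sin ((B + phi)/2)" using assms by (intro sin_ge_zero) auto
  moreover have "sin ((phi - B)/2) \<le> (phi - B)/2" using assms by (intro sin_x_le_x) auto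
  ultimately have "2 * sin ((B + phi)/2) * sin ((phi - B)/2) \<le> 2 * sin ((B + phi)/2) * ((phi - B)/2)"
    by (intro mult_left_mono) auto
  then show "cos B - cos phi \<le> (phi - B) * sin ((B + phi)/2)" using e by (simp add: mult.commute)
qed

lemma first_term_bound:
  fixes B phi u :: real
  assumes "0 \<le> B" "B < phi" "phi - B \<le> pi - phi" "0 < u"
  shows "(2/3) * (u / (phi - B)) \<le> u * sin phi / (cos B - cos phi)"
proof -
  have c: "0 < cos B - cos phi" "cos B - cos phi \<le> (phi - B) * sin ((B + phi)/2)"
    using cos_diff_le[of B phi] assms by auto
  have sm: "0 < sin ((B + phi)/2)" using assms by (intro sin_gt_zero) auto
  have s1: "(2/3) * sin ((B + phi)/2) \<le> sin phi" by (rule sin_ratio_S1) (use assms in auto)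
  have "(2/3) * (u / (phi - B)) = u * ((2/3) * sin ((B + phi)/2)) / ((phi - B) * sin ((B + phi)/2))"
    using sm assms by (simp add: field_simps)
  also have "\<dots> \<le> u * sin phi / (cos B - cos phi)"
    using s1 c sm assms by (intro frac_le mult_left_mono) auto
  finally show ?thesis .
qed

lemma ratio_bound:
  fixes A B phi :: real
  assumes "0 \<le> A" "A < B" "B < phi" "phi \<le> pi" "phi - B \<le> pi/2"
  shows "(1/2) * ((B - A) / (phi - A))^2 * (cos A - cos phi) \<le> cos A - cos B"
proof -
  define p where "p = phi - B"
  define q where "q = B - A"
  define x where "x = (A + B)/2"
  define y where "y = (A + phi)/2"
  define r where "r = q / (p + q)"
  have p0: "0 < p" and q0: "0 < q" using assms by (auto simp: p_def q_def)
  have r0: "0 < r" "r \<le> 1" using p0 q0 by (auto simp: r_def field_simps)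
  have ypq: "y = x + p/2" by (simp add: x_def y_def p_def field_simps)
  have xq: "q/2 \<le> x" using assms by (simp add: x_def q_def)
  have e1: "cos A - cos B = 2 * sin x * sin (q/2)" using cos_diff_cos[of A B] by (simp add: x_def q_def)
  have e2: "cos A - cos phi = 2 * sin y * sin ((p+q)/2)" using cos_diff_cos[of A phi] by (simp add: y_def p_def q_def)
  have sy: "0 \<le> sin y" using assms by (intro sin_ge_zero) (auto simp: y_def)
  have spq: "0 \<le> sin ((p+q)/2)" using assms by (intro sin_ge_zero) (auto simp: p_def q_def)
  have h1: "r * sin ((p+q)/2) \<le> sin (q/2)"
  proof -
    have "q/2 * sin ((p+q)/2) \<le> (p+q)/2 * sin (q/2)"
      using sin_chord[of "q/2" "(p+q)/2"] p0 q0 assms by (auto simp: p_def q_def)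
    then show ?thesis using p0 q0 by (simp add: r_def field_simps)
  qed
  have h2: "(r/2) * sin y \<le> sin x"
  proof (cases "y \<le> pi/2")
    case True
    have "x * sin y \<le> y * sin x" using sin_chord[of x y] xq q0 True ypq p0 by auto
    moreover have ypos: "0 < y" using xq q0 ypq p0 by simp
    moreover have "r \<le> x / y"
    proof -
      have e: "q * y = q * x + (q/2) * p" using ypq by (simp add: algebra_simps)
      have "(q/2) * p \<le> x * p" by (rule mult_right_mono) (use xq p0 in auto)
      hence "q * y \<le> x * (p + q)" using e by (simp add: algebra_simps)
      hence "q / (p + q) \<le> (x * (p + q)) / ((p + q) * y)"
        using p0 q0 ypos by (simp add: divide_simps)
      also have "\<dots> = x / y" using p0 q0 ypos by simp
      finally show ?thesis by (simp add: r_def)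
    qed
    ultimately have "r * sin y \<le> sin x"
    proof -
      assume a1: "x * sin y \<le> y * sin x" and a2: "r \<le> x / y"
      have "r * sin y \<le> (x / y) * sin y" using a2 sy by (rule mult_right_mono)
      also have "\<dots> = (x * sin y) / y" by simp
      also have "\<dots> \<le> (y * sin x) / y" using a1 ypos by (intro divide_right_mono) auto
      also have "\<dots> = sin x" using ypos by simp
      finally show ?thesis .
    qed
    moreover have "(r/2) * sin y \<le> r * sin y" using r0 sy by (intro mult_right_mono) auto
    ultimately show ?thesis by simp
  next
    case False
    show ?thesis
    proof (cases "pi/2 \<le> x")
      case True
      have "sin y \<le> sin x"
      proof -
        have "sin (pi - y) \<le> sin (pi - x)"
        proof (rule sin_monotone_2pi_le)
          have "y \<le> pi" using assms by (simp add: y_def)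
          then show "- (pi / 2) \<le> pi - y" using pi_gt_zero by linarith
          show "pi - y \<le> pi - x" using ypq p0 by simp
          show "pi - x \<le> pi / 2" using True by simp
        qed
        then show ?thesis by simp
      qed
      moreover have "(r/2) * sin y \<le> 1 * sin y" using r0 sy by (intro mult_right_mono) auto
      ultimately show ?thesis by simp
    next
      case False2: False
      have "pi/2 < x + p/2" using False ypq by simp
      moreover have "p \<le> pi/2" using assms by (simp add: p_def)
      ultimately have "pi/4 \<le> x" by linarith
      hence "1/2 \<le> 2 * x / pi" using pi_gt_zero by (simp add: field_simps)
      moreover have "2 * x / pi \<le> sin x" using sin_ge_lin[of x] False2 xq q0 by simp
      ultimately have "1/2 \<le> sin x" by linarith
      moreover have "(r/2) * sin y \<le> (1/2) * 1" using r0 sin_le_one[of y] sy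
        by (intro mult_mono) auto
      ultimately show ?thesis by simp
    qed
  qed
  have "(1/2) * r^2 * (cos A - cos phi) = 2 * ((r/2) * sin y) * (r * sin ((p+q)/2))"
    using e2 by (simp add: power2_eq_square algebra_simps)
  also have "\<dots> \<le> 2 * sin x * sin (q/2)"
    using h1 h2 r0 sy spq sin_ge_zero[of x] assms by (intro mult_mono mult_left_mono) (auto simp: x_def)
  also have "\<dots> = cos A - cos B" using e1 by simp
  finally show ?thesis by (simp add: r_def p_def q_def)
qed

lemma LA_core:
  fixes A B phi p' u G :: real
  assumes A0: "0 \<le> A" and AB: "A + u \<le> B" and Bphi: "B < phi" and pp: "phi - B \<le> p'"
    and ppG: "(phi - B) + p' \<le> G * u" and php: "phi + p' \<le> pi" and Gu: "G * u < pi"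
    and u0: "0 < u" and G1: "1 \<le> G"
  shows "(8/3) / (G * (G + 2)^2) \<le> u * sin phi * (1 / (cos B - cos phi) - 1 / (cos A - cos phi))"
proof -
  define p where "p = phi - B"
  define q where "q = B - A"
  have p0: "0 < p" using Bphi by (simp add: p_def)
  have qu: "u \<le> q" using AB by (simp add: q_def)
  have pG: "2 * p \<le> G * u" using pp ppG by (simp add: p_def)
  have phipi: "phi \<le> pi" using php pp p0 by (simp add: p_def)
  have cb: "0 < cos B - cos phi" using cos_diff_le(1)[of B phi] A0 AB u0 Bphi phipi by simp
  have ca: "0 < cos A - cos phi" using cos_diff_le(1)[of A phi] A0 AB u0 Bphi phipi by simp
  have X: "(2/3) * (u / p) \<le> u * sin phi / (cos B - cos phi)"
    using first_term_bound[of B phi u] A0 AB u0 Bphi pp php by (simp add: p_def)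
  have R: "(1/2) * ((B - A) / (phi - A))^2 * (cos A - cos phi) \<le> cos A - cos B"
    using ratio_bound[of A B phi] A0 AB u0 Bphi phipi pG Gu by (simp add: p_def)
  have eq: "u * sin phi * (1 / (cos B - cos phi) - 1 / (cos A - cos phi))
      = (u * sin phi / (cos B - cos phi)) * ((cos A - cos B) / (cos A - cos phi))"
    using ca cb by (simp add: field_simps)
  have R': "(1/2) * ((B - A) / (phi - A))^2 \<le> (cos A - cos B) / (cos A - cos phi)"
    using R ca by (simp add: field_simps)
  have spos: "0 \<le> sin phi" using Bphi A0 AB u0 phipi by (intro sin_ge_zero) auto
  have "(2/3) * (u / p) * ((1/2) * ((B - A) / (phi - A))^2)
      \<le> (u * sin phi / (cos B - cos phi)) * ((cos A - cos B) / (cos A - cos phi))"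
    using X R' u0 p0 spos cb by (intro mult_mono) auto
  moreover have "(8/3) / (G * (G + 2)^2) \<le> (2/3) * (u / p) * ((1/2) * ((B - A) / (phi - A))^2)"
  proof -
    have G0: "0 < G" using G1 by simp
    have a1: "2 / G \<le> u / p" using pG p0 G0 u0 by (simp add: field_simps)
    have a2: "2 / (G + 2) \<le> (B - A) / (phi - A)"
    proof -
      have "phi - A = p + q" by (simp add: p_def q_def)
      moreover have "2 * (p + q) \<le> q * (G + 2)"
      proof -
        have "G * u \<le> G * q" using qu G0 by (intro mult_left_mono) auto
        then show ?thesis using pG by (simp add: algebra_simps)
      qed
      ultimately show ?thesis using p0 qu u0 G0 by (simp add: q_def field_simps)
    qed
    have a2': "(2 / (G + 2))^2 \<le> ((B - A) / (phi - A))^2"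
      using a2 G0 by (intro power_mono) auto
    have "(8/3) / (G * (G + 2)^2) = (2/3) * (2 / G) * ((1/2) * (2 / (G + 2))^2)"
      using G0 by (simp add: field_simps power2_eq_square)
    also have "\<dots> \<le> (2/3) * (u / p) * ((1/2) * ((B - A) / (phi - A))^2)"
      using a1 a2' G0 u0 p0 by (intro mult_mono mult_left_mono) auto
    finally show ?thesis .
  qed
  ultimately show ?thesis using eq by simp
qed

lemma LA_core0:
  fixes B phi p' u G :: real
  assumes B0: "0 \<le> B" and Bphi: "B < phi" and pp: "phi - B \<le> p'"
    and ppG: "(phi - B) + p' \<le> G * u" and php: "phi + p' \<le> pi"
    and u0: "0 < u" and G1: "1 \<le> G"
  shows "(8/3) / (G * (G + 2)^2) \<le> u * sin phi / (cos B - cos phi)"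
proof -
  have X: "(2/3) * (u / (phi - B)) \<le> u * sin phi / (cos B - cos phi)"
    using first_term_bound[of B phi u] B0 u0 Bphi pp php by simp
  have G0: "0 < G" using G1 by simp
  have a1: "2 / G \<le> u / (phi - B)" using pp ppG Bphi G0 u0 by (simp add: field_simps)
  have "(8/3) / (G * (G + 2)^2) \<le> (2/3) * (2 / G)"
  proof -
    have "3^2 \<le> (G + 2)^2" by (rule power_mono) (use G1 in auto)
    hence "2 \<le> (G + 2)^2" by simp
    then show ?thesis using G0 by (simp add: field_simps)
  qed
  also have "\<dots> \<le> (2/3) * (u / (phi - B))" using a1 by (intro mult_left_mono) auto
  finally show ?thesis using X by simp
qed

definition cfg :: "(nat \<Rightarrow> real) \<Rightarrow> nat \<Rightarrow> real \<Rightarrow> real \<Rightarrow> bool" where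
  "cfg t n u G \<longleftrightarrow> 0 < u \<and> 1 \<le> G \<and> G * u < pi \<and> 3 \<le> n \<and> 0 \<le> t 0 \<and> t n \<le> pi
     \<and> t 0 \<le> (G - 1) * u \<and> pi - t n \<le> (G - 1) * u
     \<and> (\<forall>i<n. u \<le> t (Suc i) - t i \<and> t (Suc i) - t i \<le> G * u)"

lemma cfg_diff:
  assumes "cfg t n u G" "i \<le> j" "j \<le> n"
  shows "real (j - i) * u \<le> t j - t i"
  using assms(2,3)
proof (induction j)
  case 0 then show ?case by simp
next
  case (Suc j)
  show ?case
  proof (cases "i = Suc j")
    case True then show ?thesis by simp
  next
    case False
    hence "i \<le> j" using Suc by simp
    hence "real (j - i) * u \<le> t j - t i" using Suc by simp
    moreover have "u \<le> t (Suc j) - t j" using assms(1) Suc unfolding cfg_def by auto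
    moreover have "real (Suc j - i) = real (j - i) + 1" using \<open>i \<le> j\<close> by (simp add: Suc_diff_le)
    ultimately show ?thesis by (simp add: algebra_simps)
  qed
qed

lemma cfg_u: "cfg t n u G \<Longrightarrow> 0 < u" unfolding cfg_def by simp

lemma cfg_mono: "cfg t n u G \<Longrightarrow> i \<le> j \<Longrightarrow> j \<le> n \<Longrightarrow> t i \<le> t j"
proof -
  assume a: "cfg t n u G" "i \<le> j" "j \<le> n"
  have "real (j - i) * u \<le> t j - t i" using cfg_diff[OF a] .
  moreover have "0 \<le> real (j - i) * u" using cfg_u[OF a(1)] by simp
  ultimately show "t i \<le> t j" by simp
qed

lemma cfg_strict: "cfg t n u G \<Longrightarrow> i < j \<Longrightarrow> j \<le> n \<Longrightarrow> t i < t j"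
proof -
  assume a: "cfg t n u G" "i < j" "j \<le> n"
  have "real (j - i) * u \<le> t j - t i" using cfg_diff[OF a(1)] a by simp
  moreover have "1 \<le> real (j - i)" using a by simp
  moreover have "0 < u" using cfg_u[OF a(1)] .
  ultimately have "1 * u \<le> real (j - i) * u" by (intro mult_right_mono) auto
  then show ?thesis using \<open>real (j - i) * u \<le> t j - t i\<close> \<open>0 < u\<close> by linarith
qed

lemma cfg_range: "cfg t n u G \<Longrightarrow> i \<le> n \<Longrightarrow> 0 \<le> t i \<and> t i \<le> pi"
  using cfg_mono[of t n u G 0 i] cfg_mono[of t n u G i n] unfolding cfg_def by auto

lemma cfg_sdec: "cfg t n u G \<Longrightarrow> sdec (\<lambda>i. cos (t i)) n"
  unfolding sdec_def
proof (intro allI impI)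
  fix i j assume a: "cfg t n u G" "i < j" "j \<le> n"
  show "cos (t j) < cos (t i)"
    using cos_monotone_0_pi[of "t i" "t j"] cfg_strict[OF a] cfg_range[OF a(1), of i] cfg_range[OF a(1), of j] a
    by auto
qed

lemma cfg_refl:
  assumes c: "cfg t n u G" shows "cfg (\<lambda>i. pi - t (n - i)) n u G"
proof -
  have g: "\<And>i. i < n \<Longrightarrow> u \<le> t (Suc i) - t i \<and> t (Suc i) - t i \<le> G * u"
    using c unfolding cfg_def by blast
  have gg: "u \<le> pi - t (n - Suc i) - (pi - t (n - i)) \<and> pi - t (n - Suc i) - (pi - t (n - i)) \<le> G * u"
    if i: "i < n" for i
  proof -
    have e: "n - i = Suc (n - Suc i)" using i by simp
    have "u \<le> t (Suc (n - Suc i)) - t (n - Suc i) \<and> t (Suc (n - Suc i)) - t (n - Suc i) \<le> G * u"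
      using g[of "n - Suc i"] i by simp
    then show ?thesis using e by simp
  qed
  have r: "0 < u" "1 \<le> G" "G * u < pi" "3 \<le> n" "0 \<le> t 0" "t n \<le> pi"
    "t 0 \<le> (G - 1) * u" "pi - t n \<le> (G - 1) * u" using c unfolding cfg_def by auto
  show ?thesis unfolding cfg_def using r gg by simp
qed

lemma reflx_cos: "reflx (\<lambda>i. cos (t i)) n = (\<lambda>i. cos (pi - t (n - i)))"
  unfolding reflx_def by auto

lemma sin_mid_ge:
  fixes phi t :: real assumes "0 \<le> phi" "phi \<le> pi" "0 \<le> t" "t \<le> pi"
  shows "sin phi / 2 \<le> sin ((phi + t)/2)"
proof -
  have sd: "sin phi = 2 * sin (phi/2) * cos (phi/2)" using sin_double[of "phi/2"] by simp
  have s0: "0 \<le> sin (phi/2)" "sin (phi/2) \<le> 1" using assms by (auto intro: sin_ge_zero)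
  have c0: "0 \<le> cos (phi/2)" "cos (phi/2) \<le> 1" using assms by (auto intro: cos_ge_zero)
  have "sin (phi/2) * cos (phi/2) \<le> sin ((phi + t)/2)"
  proof (cases "(phi + t)/2 \<le> pi/2")
    case True
    have "sin (phi/2) \<le> sin ((phi + t)/2)"
    proof (rule sin_monotone_2pi_le)
      show "- (pi / 2) \<le> phi / 2" using assms by simp
      show "phi / 2 \<le> (phi + t) / 2" using assms by simp
      show "(phi + t) / 2 \<le> pi / 2" using True by simp
    qed
    moreover have "sin (phi/2) * cos (phi/2) \<le> sin (phi/2)" using s0 c0 by (simp add: mult_left_le)
    ultimately show ?thesis by simp
  next
    case False
    have "sin ((pi - phi)/2) \<le> sin (pi - (phi + t)/2)"
    proof (rule sin_monotone_2pi_le)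
      show "- (pi / 2) \<le> (pi - phi) / 2" using assms by simp
      show "(pi - phi) / 2 \<le> pi - (phi + t) / 2" using assms by (simp add: field_simps)
      show "pi - (phi + t) / 2 \<le> pi / 2" using False by simp
    qed
    moreover have "sin ((pi - phi)/2) = cos (phi/2)"
      using sin_cos_eq[of "(pi - phi)/2"] by (simp add: field_simps)
    moreover have "sin (phi/2) * cos (phi/2) \<le> cos (phi/2)" using s0 c0 by (simp add: mult_left_le_one_le)
    ultimately show ?thesis by simp
  qed
  then show ?thesis using sd by simp
qed

lemma trig_term:
  fixes phi t :: real assumes "0 \<le> phi" "phi \<le> pi" "0 \<le> t" "t \<le> pi" "phi \<noteq> t" "0 < sin phi"
  shows "1 / \<bar>cos phi - cos t\<bar> \<le> pi / (sin phi * \<bar>phi - t\<bar>)"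
proof -
  have e: "cos phi - cos t = 2 * sin ((phi + t)/2) * sin ((t - phi)/2)" by (rule cos_diff_cos)
  have m: "sin phi / 2 \<le> sin ((phi + t)/2)" by (rule sin_mid_ge) (use assms in auto)
  have d: "\<bar>phi - t\<bar> / pi \<le> \<bar>sin ((t - phi)/2)\<bar>"
  proof (cases "phi < t")
    case True
    have "(t - phi) / pi \<le> sin ((t - phi)/2)" using sin_half_ge[of "t - phi"] assms True by simp
    moreover have "\<bar>phi - t\<bar> = t - phi" using True by simp
    ultimately show ?thesis by simp
  next
    case False
    have "(phi - t) / pi \<le> sin ((phi - t)/2)" using sin_half_ge[of "phi - t"] assms False by simp
    moreover have "(t - phi)/2 = - ((phi - t)/2)" by (simp add: field_simps)
    hence "sin ((t - phi)/2) = - sin ((phi - t)/2)" by (simp only: sin_minus)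
    moreover have "\<bar>phi - t\<bar> = phi - t" using False by simp
    ultimately show ?thesis by simp
  qed
  have pos: "0 < \<bar>phi - t\<bar>" using assms by simp
  have sm0: "0 \<le> sin phi / 2" using assms by simp
  have sb: "0 \<le> sin ((phi + t)/2)" using m sm0 by linarith
  have "sin phi * \<bar>phi - t\<bar> / pi \<le> \<bar>cos phi - cos t\<bar>"
  proof -
    have "sin phi * \<bar>phi - t\<bar> / pi = 2 * ((sin phi / 2) * (\<bar>phi - t\<bar> / pi))" by simp
    also have "(sin phi / 2) * (\<bar>phi - t\<bar> / pi) \<le> sin ((phi + t)/2) * \<bar>sin ((t - phi)/2)\<bar>"
      by (rule mult_mono[OF m d sb]) simp
    hence "2 * ((sin phi / 2) * (\<bar>phi - t\<bar> / pi)) \<le> 2 * (sin ((phi + t)/2) * \<bar>sin ((t - phi)/2)\<bar>)"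
      by simp
    also have "2 * (sin ((phi + t)/2) * \<bar>sin ((t - phi)/2)\<bar>) = \<bar>cos phi - cos t\<bar>"
    proof -
      have "0 \<le> sin ((phi + t)/2)" using m sm0 by linarith
      then show ?thesis unfolding e by (simp add: abs_mult)
    qed
    finally show ?thesis .
  qed
  moreover have "0 < sin phi * \<bar>phi - t\<bar> / pi" using assms pos by simp
  ultimately have "1 / \<bar>cos phi - cos t\<bar> \<le> 1 / (sin phi * \<bar>phi - t\<bar> / pi)"
  proof -
    assume l: "sin phi * \<bar>phi - t\<bar> / pi \<le> \<bar>cos phi - cos t\<bar>" and p: "0 < sin phi * \<bar>phi - t\<bar> / pi"
    have c0: "0 < \<bar>cos phi - cos t\<bar>" using l p by linarith
    show ?thesis by (rule divide_left_mono[OF l], simp, rule mult_pos_pos[OF c0 p])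
  qed
  then show ?thesis by simp
qed

lemma harm_rev: "(\<Sum>i<k. 1 / real (k - i)) = (harm k :: real)"
proof -
  have "(\<Sum>i<k. 1 / real (k - i)) = (\<Sum>j<k. 1 / real (Suc j))"
    by (rule sum.reindex_bij_witness[where i="\<lambda>j. k - Suc j" and j="\<lambda>i. k - Suc i"]) auto
  then show ?thesis by (simp add: harm_altdef divide_inverse)
qed

lemma harm_shift: "(\<Sum>i\<in>{Suc (Suc k)..n}. 1 / real (i - Suc k)) = (harm (n - Suc k) :: real)"
proof -
  have "(\<Sum>i\<in>{Suc (Suc k)..n}. 1 / real (i - Suc k)) = (\<Sum>j<n - Suc k. 1 / real (Suc j))"
    by (rule sum.reindex_bij_witness[where i="\<lambda>j. j + Suc (Suc k)" and j="\<lambda>i. i - Suc (Suc k)"]) auto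
  then show ?thesis by (simp add: harm_altdef divide_inverse)
qed

lemma harm_le_ln: "1 \<le> m \<Longrightarrow> harm m \<le> 1 + ln (real m)"
proof -
  assume m: "1 \<le> m"
  then obtain j where j: "m = Suc j" by (cases m) auto
  have "harm (Suc j) - ln (real (Suc j)) \<le> harm (Suc 0) - ln (real (Suc 0))"
    using decseq_harm_diff_ln[unfolded decseq_def, rule_format, of 0 j] by simp
  moreover have "harm 0 = (0::real)" by (simp add: harm_def)
  ultimately show ?thesis using j by (simp add: harm_Suc)
qed

lemma sum_split4:
  fixes f :: "nat \<Rightarrow> real" assumes "k < n"
  shows "(\<Sum>i\<le>n. f i) = (\<Sum>i<k. f i) + f k + f (Suc k) + (\<Sum>i\<in>{Suc (Suc k)..n}. f i)"
proof -
  have "{..n} = {..<k} \<union> {k..n}" using assms by auto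
  moreover have "sum f ({..<k} \<union> {k..n}) = sum f {..<k} + sum f {k..n}"
    by (rule sum.union_disjoint) auto
  ultimately have "(\<Sum>i\<le>n. f i) = (\<Sum>i<k. f i) + (\<Sum>i\<in>{k..n}. f i)"
    by simp
  moreover have "(\<Sum>i\<in>{k..n}. f i) = f k + (\<Sum>i\<in>{Suc k..n}. f i)"
    using assms by (simp add: sum.atLeast_Suc_atMost)
  moreover have "(\<Sum>i\<in>{Suc k..n}. f i) = f (Suc k) + (\<Sum>i\<in>{Suc (Suc k)..n}. f i)"
    using assms by (simp add: sum.atLeast_Suc_atMost)
  ultimately show ?thesis by simp
qed

lemma div_mono_aux:
  fixes s a b c :: real
  assumes "0 < s" "0 < a" "a \<le> b" "0 \<le> c"
  shows "c / (s * b) \<le> c / (s * a)"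
  using assms by (intro frac_le) (auto intro: mult_pos_pos mult_left_mono)

lemma caseI:
  assumes c: "cfg t n u G" and k: "k < n"
    and ph: "t k < phi" "phi < t (Suc k)" "phi - t k \<le> t (Suc k) - phi"
  shows "lamf (\<lambda>i. cos (t i)) n (cos phi) \<le> 1 + pi * (3 * G * (G + 2)^2 / 8) * (2 + harm k + harm (n - Suc k))"
proof -
  define x where "x = (\<lambda>i. cos (t i))"
  define z where "z = cos phi"
  have u0: "0 < u" and G1: "1 \<le> G" and Gu: "G * u < pi" using c unfolding cfg_def by auto
  have gap: "\<And>i. i < n \<Longrightarrow> u \<le> t (Suc i) - t i \<and> t (Suc i) - t i \<le> G * u" using c unfolding cfg_def by auto
  have rng: "\<And>i. i \<le> n \<Longrightarrow> 0 \<le> t i \<and> t i \<le> pi" using cfg_range[OF c] by auto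
  have phi0: "0 < phi" using rng[of k] k ph by auto
  have phipi: "phi < pi" using rng[of "Suc k"] k ph by auto
  have sp: "0 < sin phi" using phi0 phipi by (intro sin_gt_zero)
  have sd: "sdec x n" unfolding x_def by (rule cfg_sdec[OF c])
  have zk: "z < x k" unfolding x_def z_def using cos_monotone_0_pi[of "t k" phi] rng[of k] k ph phipi by auto
  have zk1: "x (Suc k) < z" unfolding x_def z_def using cos_monotone_0_pi[of phi "t (Suc k)"] rng[of "Suc k"] k ph phi0 by auto
  have notnode: "\<not> (\<exists>i\<le>n. z = x i)"
  proof
    assume "\<exists>i\<le>n. z = x i"
    then obtain i where i: "i \<le> n" "z = x i" by auto
    show False
    proof (cases "i \<le> k")
      case True then have "x k \<le> x i" using sdec_le[OF sd] k by auto
      then show False using i zk by simp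
    next
      case False then have "x i \<le> x (Suc k)" using sdec_le[OF sd] i by auto
      then show False using i zk1 by simp
    qed
  qed
  note spl = Dn_abs_split[OF sd less_imp_le[OF k] zk zk1]
  define ASa where "ASa = AS (\<lambda>j. 1 / (x (k - j) - z)) k"
  define ASb where "ASb = AS (\<lambda>j. 1 / (z - x (Suc k + j))) (n - Suc k)"
  have Dsp: "\<bar>Dn x n z\<bar> = ASa + ASb" using spl(1) k by (simp add: ASa_def ASb_def)
  have ASb0: "0 \<le> ASb" using spl(3) k by (simp add: ASb_def)
  define b1 where "b1 = 1 / (x k - z)"
  define b2 where "b2 = (if 0 < k then 1 / (x (k - 1) - z) else 0)"
  define a1 where "a1 = 1 / (z - x (Suc k))"
  define a2 where "a2 = (if Suc k < n then 1 / (z - x (Suc (Suc k))) else 0)"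
  have ABa: "0 \<le> ASa \<and> ASa \<le> 1 / (x (k - 0) - z) \<and> (0 < k \<longrightarrow> 1 / (x (k - 0) - z) - 1 / (x (k - 1) - z) \<le> ASa)"
    unfolding ASa_def by (rule AS_bounds) (use above_seq[OF sd less_imp_le[OF k] zk] in auto)
  have Aa: "b1 - b2 \<le> ASa"
  proof (cases "k = 0")
    case True
    then show ?thesis unfolding ASa_def b1_def b2_def by (simp add: AS_0)
  next
    case False then show ?thesis using ABa by (simp add: b1_def b2_def)
  qed
  have ABb: "0 \<le> ASb \<and> ASb \<le> 1 / (z - x (Suc k + 0)) \<and> (0 < n - Suc k \<longrightarrow> 1 / (z - x (Suc k + 0)) - 1 / (z - x (Suc k + 1)) \<le> ASb)"
    unfolding ASb_def by (rule AS_bounds) (use below_seq[OF sd k zk1] in auto)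
  have Ab: "a1 - a2 \<le> ASb"
  proof (cases "Suc k < n")
    case False
    then have "n - Suc k = 0" by simp
    then show ?thesis unfolding ASb_def a1_def a2_def using False by (simp add: AS_0)
  next
    case True then show ?thesis using ABb by (simp add: a1_def a2_def)
  qed
  have LA: "(8/3) / (G * (G + 2)^2) \<le> u * sin phi * \<bar>Dn x n z\<bar>"
  proof -
    have "(8/3) / (G * (G + 2)^2) \<le> u * sin phi * ASa"
    proof (cases "k = 0")
      case True
      have "(8/3) / (G * (G + 2)^2) \<le> u * sin phi / (cos (t 0) - cos phi)"
        using LA_core0[of "t 0" phi "t 1 - phi" G u] rng[of 0] ph gap[of 0] rng[of 1] k True u0 G1
        by auto
      moreover have "ASa = 1 / (cos (t 0) - cos phi)" unfolding ASa_def using True by (simp add: AS_0 x_def z_def)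
      ultimately show ?thesis by simp
    next
      case False
      have "(8/3) / (G * (G + 2)^2) \<le> u * sin phi * (1 / (cos (t k) - cos phi) - 1 / (cos (t (k - 1)) - cos phi))"
      proof (rule LA_core[where p'="t (Suc k) - phi"])
        show "0 \<le> t (k - 1)" using rng[of "k - 1"] k by auto
        have km: "k - 1 < n" using k by simp
        show "t (k - 1) + u \<le> t k" using gap[OF km] False by simp
        show "t k < phi" "phi - t k \<le> t (Suc k) - phi" using ph by auto
        show "phi - t k + (t (Suc k) - phi) \<le> G * u" using gap[of k] k by auto
        show "phi + (t (Suc k) - phi) \<le> pi" using rng[of "Suc k"] k by auto
      qed (use Gu u0 G1 in auto)
      moreover have "1 / (cos (t k) - cos phi) - 1 / (cos (t (k - 1)) - cos phi) \<le> ASa"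
        using Aa False by (simp add: b1_def b2_def x_def z_def)
      ultimately show ?thesis using u0 sp by (smt (verit) mult_left_mono mult_pos_pos)
    qed
    moreover have "u * sin phi * ASa \<le> u * sin phi * \<bar>Dn x n z\<bar>"
      using Dsp ASb0 u0 sp by (intro mult_left_mono) auto
    ultimately show ?thesis by simp
  qed
  define P where "P = pi / (u * sin phi)"
  have P0: "0 < P" using u0 sp by (simp add: P_def)
  have tb: "\<And>i. i \<le> n \<Longrightarrow> i \<noteq> k \<Longrightarrow> i \<noteq> Suc k \<Longrightarrow> 1 / \<bar>z - x i\<bar> \<le> pi / (sin phi * \<bar>phi - t i\<bar>)"
  proof -
    fix i assume i: "i \<le> n" "i \<noteq> k" "i \<noteq> Suc k"
    have "phi \<noteq> t i" using notnode i unfolding x_def z_def by auto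
    then show "1 / \<bar>z - x i\<bar> \<le> pi / (sin phi * \<bar>phi - t i\<bar>)"
      unfolding x_def z_def using trig_term[of phi "t i"] rng[OF i(1)] phi0 phipi sp by auto
  qed
  have lowsum: "(\<Sum>i<k. 1 / \<bar>z - x i\<bar>) \<le> P * harm k"
  proof -
    have "(\<Sum>i<k. 1 / \<bar>z - x i\<bar>) \<le> (\<Sum>i<k. P * (1 / real (k - i)))"
    proof (rule sum_mono)
      fix i assume "i \<in> {..<k}"
      hence i: "i < k" by simp
      have d: "real (k - i) * u \<le> t k - t i" using cfg_diff[OF c, of i k] i k by simp
      have d0: "0 < real (k - i) * u" using i u0 by simp
      have "t i \<le> t k" using cfg_mono[OF c, of i k] i k by simp
      hence "\<bar>phi - t i\<bar> = phi - t i" using ph by simp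
      hence "real (k - i) * u \<le> \<bar>phi - t i\<bar>" using d ph by linarith
      hence "pi / (sin phi * \<bar>phi - t i\<bar>) \<le> pi / (sin phi * (real (k - i) * u))"
        by (rule div_mono_aux[OF sp d0]) simp_all
      also have "\<dots> = P * (1 / real (k - i))" by (simp add: P_def field_simps)
      finally show "1 / \<bar>z - x i\<bar> \<le> P * (1 / real (k - i))" using tb[of i] i k by simp
    qed
    also have "\<dots> = P * (\<Sum>i<k. 1 / real (k - i))" by (simp only: sum_distrib_left)
    also have "\<dots> = P * harm k" by (simp only: harm_rev)
    finally show ?thesis .
  qed
  have highsum: "(\<Sum>i\<in>{Suc (Suc k)..n}. 1 / \<bar>z - x i\<bar>) \<le> P * harm (n - Suc k)"
  proof -
    have "(\<Sum>i\<in>{Suc (Suc k)..n}. 1 / \<bar>z - x i\<bar>) \<le> (\<Sum>i\<in>{Suc (Suc k)..n}. P * (1 / real (i - Suc k)))"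
    proof (rule sum_mono)
      fix i assume "i \<in> {Suc (Suc k)..n}"
      hence i: "Suc (Suc k) \<le> i" "i \<le> n" by auto
      have d: "real (i - Suc k) * u \<le> t i - t (Suc k)" using cfg_diff[OF c, of "Suc k" i] i by simp
      have d0: "0 < real (i - Suc k) * u" using i u0 by simp
      have "t (Suc k) \<le> t i" using cfg_mono[OF c, of "Suc k" i] i by simp
      hence "\<bar>phi - t i\<bar> = t i - phi" using ph by simp
      hence "real (i - Suc k) * u \<le> \<bar>phi - t i\<bar>" using d ph by linarith
      hence "pi / (sin phi * \<bar>phi - t i\<bar>) \<le> pi / (sin phi * (real (i - Suc k) * u))"
        by (rule div_mono_aux[OF sp d0]) simp_all
      also have "\<dots> = P * (1 / real (i - Suc k))" by (simp add: P_def field_simps)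
      finally show "1 / \<bar>z - x i\<bar> \<le> P * (1 / real (i - Suc k))" using tb[of i] i by simp
    qed
    also have "\<dots> = P * (\<Sum>i\<in>{Suc (Suc k)..n}. 1 / real (i - Suc k))" by (simp only: sum_distrib_left)
    also have "\<dots> = P * harm (n - Suc k)" by (simp only: harm_shift)
    finally show ?thesis .
  qed
  have b2P: "b2 \<le> P"
  proof (cases "0 < k")
    case True
    have d: "u \<le> t k - t (k - 1)" using gap[of "k - 1"] True k by simp
    have "\<bar>phi - t (k - 1)\<bar> = phi - t (k - 1)" using d u0 ph by simp
    hence "u \<le> \<bar>phi - t (k - 1)\<bar>" using d ph by simp
    hence "pi / (sin phi * \<bar>phi - t (k - 1)\<bar>) \<le> pi / (sin phi * u)"
      by (rule div_mono_aux[OF sp u0]) simp_all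
    moreover have "b2 = 1 / \<bar>z - x (k - 1)\<bar>" using True zk sdec_le[OF sd, of "k - 1" k] k
      by (simp add: b2_def abs_minus_commute)
    moreover have "1 / \<bar>z - x (k - 1)\<bar> \<le> pi / (sin phi * \<bar>phi - t (k - 1)\<bar>)"
      by (rule tb) (use True k in auto)
    ultimately show ?thesis by (simp add: P_def mult.commute)
  qed (simp add: b2_def P0 less_imp_le)
  have a2P: "a2 \<le> P"
  proof (cases "Suc k < n")
    case True
    have d: "u \<le> t (Suc (Suc k)) - t (Suc k)" using gap[of "Suc k"] True by simp
    have "\<bar>phi - t (Suc (Suc k))\<bar> = t (Suc (Suc k)) - phi" using d u0 ph by simp
    hence "u \<le> \<bar>phi - t (Suc (Suc k))\<bar>" using d ph by simp
    hence "pi / (sin phi * \<bar>phi - t (Suc (Suc k))\<bar>) \<le> pi / (sin phi * u)"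
      by (rule div_mono_aux[OF sp u0]) simp_all
    moreover have "a2 = 1 / \<bar>z - x (Suc (Suc k))\<bar>" using True zk1 sdec_le[OF sd, of "Suc k" "Suc (Suc k)"]
      by (simp add: a2_def)
    moreover have "1 / \<bar>z - x (Suc (Suc k))\<bar> \<le> pi / (sin phi * \<bar>phi - t (Suc (Suc k))\<bar>)"
      by (rule tb) (use True k in auto)
    ultimately show ?thesis by (simp add: P_def mult.commute)
  qed (simp add: a2_def P0 less_imp_le)
  have Nb: "Num x n z \<le> \<bar>Dn x n z\<bar> + P * (2 + harm k + harm (n - Suc k))"
  proof -
    have "Num x n z = (\<Sum>i<k. 1 / \<bar>z - x i\<bar>) + 1 / \<bar>z - x k\<bar> + 1 / \<bar>z - x (Suc k)\<bar> + (\<Sum>i\<in>{Suc (Suc k)..n}. 1 / \<bar>z - x i\<bar>)"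
      unfolding Num_def by (rule sum_split4[OF k])
    moreover have "1 / \<bar>z - x k\<bar> = b1" using zk by (simp add: b1_def abs_minus_commute)
    moreover have "1 / \<bar>z - x (Suc k)\<bar> = a1" using zk1 by (simp add: a1_def)
    ultimately have "Num x n z \<le> P * harm k + b1 + a1 + P * harm (n - Suc k)"
      using lowsum highsum by linarith
    moreover have "b1 + a1 \<le> \<bar>Dn x n z\<bar> + b2 + a2" using Aa Ab Dsp by linarith
    ultimately show ?thesis using b2P a2P by (simp add: algebra_simps)
  qed
  have Dpos: "0 < \<bar>Dn x n z\<bar>"
  proof -
    have "0 < (8/3) / (G * (G + 2)^2)" using G1 by simp
    hence "0 < u * sin phi * \<bar>Dn x n z\<bar>" using LA by linarith
    then show ?thesis by (cases "Dn x n z = 0") auto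
  qed
  have "lamf x n z = Num x n z / \<bar>Dn x n z\<bar>" by (rule lam_off[OF notnode])
  also have "\<dots> \<le> (\<bar>Dn x n z\<bar> + P * (2 + harm k + harm (n - Suc k))) / \<bar>Dn x n z\<bar>"
    using Nb Dpos by (intro divide_right_mono) auto
  also have "\<dots> = 1 + (P / \<bar>Dn x n z\<bar>) * (2 + harm k + harm (n - Suc k))"
    using Dpos by (simp add: field_simps)
  also have "\<dots> \<le> 1 + (pi * (3 * G * (G + 2)^2 / 8)) * (2 + harm k + harm (n - Suc k))"
  proof -
    have "P / \<bar>Dn x n z\<bar> \<le> pi * (3 * G * (G + 2)^2 / 8)"
    proof -
      have G0: "0 < G * (G + 2)^2" using G1 by simp
      have "P / \<bar>Dn x n z\<bar> = pi / (u * sin phi * \<bar>Dn x n z\<bar>)" by (simp add: P_def)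
      also have "\<dots> \<le> pi / ((8/3) / (G * (G + 2)^2))"
        by (rule frac_le) (use LA G0 in auto)
      also have "\<dots> = pi * (3 * G * (G + 2)^2 / 8)" by (simp add: field_simps)
      finally show ?thesis .
    qed
    moreover have "0 \<le> (2::real) + harm k + harm (n - Suc k)" using harm_nonneg[where 'a=real, of k] harm_nonneg[where 'a=real, of "n - Suc k"] by linarith
    ultimately have "(P / \<bar>Dn x n z\<bar>) * (2 + harm k + harm (n - Suc k)) \<le> (pi * (3 * G * (G + 2)^2 / 8)) * (2 + harm k + harm (n - Suc k))"
      by (rule mult_right_mono)
    then show ?thesis by linarith
  qed
  finally show ?thesis unfolding x_def z_def by simp
qed

lemma tele_aux: "0 < (A::real) \<Longrightarrow> 0 < u \<Longrightarrow> 1 / (A * (A + u)) = 1 / (A * u) - 1 / ((A + u) * u)"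
  by (simp add: divide_simps)

lemma telescope_sq:
  fixes a u :: real assumes "0 < a" "0 < u"
  shows "(\<Sum>m\<in>{1..M}. 1 / (a + real m * u)^2) \<le> 1 / (a * u) - 1 / ((a + real M * u) * u)"
proof (induction M)
  case 0 then show ?case by simp
next
  case (Suc M)
  have p1: "0 < a + real M * u" using assms by (simp add: add_pos_nonneg)
  have p2: "0 < a + real (Suc M) * u" using assms by (simp add: add_pos_nonneg)
  have "1 / (a + real (Suc M) * u)^2 \<le> 1 / ((a + real M * u) * (a + real (Suc M) * u))"
  proof -
    have "(a + real M * u) * (a + real (Suc M) * u) \<le> (a + real (Suc M) * u)^2"
      using p1 p2 assms by (simp add: power2_eq_square mult_right_mono)
    then show ?thesis using p1 p2 by (intro divide_left_mono) (auto intro: mult_pos_pos)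
  qed
  also have "\<dots> = 1 / ((a + real M * u) * u) - 1 / ((a + real (Suc M) * u) * u)"
  proof -
    have e: "a + real (Suc M) * u = (a + real M * u) + u" by (simp add: algebra_simps)
    show ?thesis unfolding e by (rule tele_aux[OF p1 assms(2)])
  qed
  finally have "1 / (a + real (Suc M) * u)^2 \<le> 1 / ((a + real M * u) * u) - 1 / ((a + real (Suc M) * u) * u)" .
  then show ?case using Suc by simp
qed

lemma telescope_sq':
  fixes a u :: real assumes "0 < a" "0 < u"
  shows "(\<Sum>m\<in>{1..M}. 1 / (a + real m * u)^2) \<le> 1 / (a * u)"
proof -
  have "0 \<le> 1 / ((a + real M * u) * u)" using assms by (simp add: add_pos_nonneg less_imp_le)
  then show ?thesis using telescope_sq[OF assms, of M] by linarith
qed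

lemma caseO:
  assumes c: "cfg t n u G" and ph: "0 \<le> phi" "phi < t 0"
  shows "lamf (\<lambda>i. cos (t i)) n (cos phi) \<le> 1 + pi^4 / 4 * G * (G - 1)^2"
proof -
  define x where "x = (\<lambda>i. cos (t i))"
  define z where "z = cos phi"
  have u0: "0 < u" and G1: "1 \<le> G" and Gu: "G * u < pi" and n3: "3 \<le> n" and t0G: "t 0 \<le> (G - 1) * u"
    using c unfolding cfg_def by auto
  have gap: "\<And>i. i < n \<Longrightarrow> u \<le> t (Suc i) - t i \<and> t (Suc i) - t i \<le> G * u" using c unfolding cfg_def by auto
  have rng: "\<And>i. i \<le> n \<Longrightarrow> 0 \<le> t i \<and> t i \<le> pi" using cfg_range[OF c] by auto
  have sd: "sdec x n" unfolding x_def by (rule cfg_sdec[OF c])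
  have z0: "x 0 < z" unfolding x_def z_def using cos_monotone_0_pi[of phi "t 0"] rng[of 0] ph by auto
  have z1: "z \<le> 1" by (simp add: z_def)
  have xle: "\<And>i. i \<le> n \<Longrightarrow> x i \<le> x 0" using sdec_le[OF sd] by auto
  have notnode: "\<not> (\<exists>i\<le>n. z = x i)" using xle z0 by force
  define v where "v = (\<lambda>j. 1 / (z - x j))"
  have x10: "x 1 < x 0" using sd n3 unfolding sdec_def by auto
  have Dv: "Dn x n z = AS v n" unfolding v_def by (rule Dn_above[OF sd z0])
  have vdec: "\<And>i. i < n \<Longrightarrow> v (Suc i) \<le> v i"
  proof -
    fix i assume i: "i < n"
    have "x (Suc i) \<le> x i" "x i \<le> x 0" using sdec_le[OF sd] i by auto
    then show "v (Suc i) \<le> v i" unfolding v_def using z0 by (intro divide_left_mono) (auto intro: mult_pos_pos)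
  qed
  have vnn: "\<And>i. i \<le> n \<Longrightarrow> 0 \<le> v i" unfolding v_def using xle z0 by (smt (verit) divide_nonneg_nonneg)
  have ASb: "v 0 - v 1 \<le> AS v n" using AS_bounds[of n v, OF vdec vnn] n3 by auto
  have vd: "v 0 - v 1 = (x 0 - x 1) / ((z - x 0) * (z - x 1))" unfolding v_def using z0 x10
    by (simp add: field_simps)
  have vdpos: "0 < v 0 - v 1" unfolding vd using z0 x10 by (auto intro!: divide_pos_pos mult_pos_pos)
  have Dge: "v 0 - v 1 \<le> \<bar>Dn x n z\<bar>" using ASb Dv by simp
  define S where "S = (\<Sum>j\<in>{1..n}. v j)"
  have Num_eq: "Num x n z = v 0 + S"
  proof -
    have "Num x n z = (\<Sum>j\<le>n. v j)" unfolding Num_def v_def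
    proof (intro sum.cong refl)
      fix i assume "i \<in> {..n}"
      then have "x i < z" using xle[of i] z0 by force
      then show "1 / \<bar>z - x i\<bar> = 1 / (z - x i)" by simp
    qed
    also have "\<dots> = v 0 + S" unfolding S_def
      by (simp add: atLeast0AtMost[symmetric] sum.atLeast_Suc_atMost)
    finally show ?thesis .
  qed
  have v1S: "v 1 \<le> S" unfolding S_def using n3 vnn by (intro member_le_sum) auto
  have S0: "0 \<le> S" using v1S vnn[of 1] n3 by simp
  have lam1: "lamf x n z \<le> 1 + 2 * (S / (v 0 - v 1))"
  proof -
    have "lamf x n z = Num x n z / \<bar>Dn x n z\<bar>" by (rule lam_off[OF notnode])
    also have "\<dots> \<le> ((v 0 - v 1) + 2 * S) / \<bar>Dn x n z\<bar>"
      using Num_eq v1S Dge vdpos by (intro divide_right_mono) auto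
    also have "\<dots> \<le> ((v 0 - v 1) + 2 * S) / (v 0 - v 1)"
      using Dge vdpos S0 by (intro divide_left_mono) (auto intro: mult_pos_pos)
    also have "\<dots> = 1 + 2 * (S / (v 0 - v 1))" using vdpos by (simp add: field_simps)
    finally show ?thesis .
  qed
  define R0 where "R0 = (1 - x 0) / (x 0 - x 1)"
  have t1: "t 0 + u \<le> t 1" "t 1 \<le> t 0 + G * u" using gap[of 0] n3 by auto
  have R0b: "R0 \<le> pi^2 / 4 * (G - 1)^2"
  proof -
    have num: "1 - x 0 \<le> ((G - 1) * u)^2 / 2"
    proof -
      have "1 - x 0 \<le> (t 0)^2 / 2" unfolding x_def by (rule one_minus_cos_le)
      moreover have "(t 0)^2 \<le> ((G - 1) * u)^2" using t0G rng[of 0] by (intro power_mono) auto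
      ultimately show ?thesis by simp
    qed
    have s1: "u / pi \<le> sin ((t 1 - t 0)/2)"
    proof -
      have "(t 1 - t 0) / pi \<le> sin ((t 1 - t 0)/2)" using sin_half_ge[of "t 1 - t 0"] t1 rng[of 0] rng[of 1] n3 u0 by auto
      moreover have "u / pi \<le> (t 1 - t 0) / pi" using t1 by (simp add: divide_right_mono)
      ultimately show ?thesis by simp
    qed
    have s2: "u / pi \<le> sin ((t 0 + t 1)/2)"
    proof -
      have tn: "real (n - 1) * u \<le> t n - t 1" using cfg_diff[OF c, of 1 n] n3 by simp
      have "1 * u \<le> real (n - 1) * u" using n3 u0 by (intro mult_right_mono) auto
      hence "u \<le> pi - t 1" using tn rng[of n] by simp
      hence m2b: "u / 2 \<le> pi - (t 0 + t 1)/2" using t1 rng[of 0] by (simp add: field_simps)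
      have m2a: "u / 2 \<le> (t 0 + t 1)/2" using t1 rng[of 0] by (simp add: field_simps)
      have m2: "u / 2 \<le> min ((t 0 + t 1)/2) (pi - (t 0 + t 1)/2)" using m2a m2b by (rule min.boundedI)
      have "2 * min ((t 0 + t 1)/2) (pi - (t 0 + t 1)/2) / pi \<le> sin ((t 0 + t 1)/2)"
        by (rule sin_ge_lin2) (use rng[of 0] rng[of 1] n3 in auto)
      moreover have "2 * (u / 2) / pi \<le> 2 * min ((t 0 + t 1)/2) (pi - (t 0 + t 1)/2) / pi"
      proof (rule divide_right_mono)
        show "2 * (u / 2) \<le> 2 * min ((t 0 + t 1)/2) (pi - (t 0 + t 1)/2)" by (rule mult_left_mono[OF m2]) simp
      qed simp
      ultimately show ?thesis by simp
    qed
    have den: "2 * (u / pi)^2 \<le> x 0 - x 1"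
    proof -
      have "x 0 - x 1 = 2 * sin ((t 0 + t 1)/2) * sin ((t 1 - t 0)/2)" unfolding x_def by (rule cos_diff_cos)
      moreover have "(u / pi) * (u / pi) \<le> sin ((t 0 + t 1)/2) * sin ((t 1 - t 0)/2)"
      proof (rule mult_mono[OF s2 s1])
        have up: "0 \<le> u / pi" using u0 by simp
        show "0 \<le> sin ((t 0 + t 1)/2)" using s2 up by linarith
        show "0 \<le> u / pi" by (rule up)
      qed
      ultimately show ?thesis by (simp add: power2_eq_square)
    qed
    have dp: "0 < 2 * (u / pi)^2" using u0 by simp
    have "R0 \<le> (((G - 1) * u)^2 / 2) / (2 * (u / pi)^2)"
      unfolding R0_def using num den dp x10 by (intro frac_le) (auto simp: x_def one_minus_cos_le)
    also have "\<dots> = pi^2 / 4 * (G - 1)^2" using u0 by (simp add: field_simps power2_eq_square)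
    finally show ?thesis .
  qed
  have R00: "0 \<le> R0" unfolding R0_def using x10 by (simp add: x_def)
  have tj: "\<And>j. j \<in> {1..n} \<Longrightarrow> v j / (v 0 - v 1) \<le> R0 * (pi^2 / 4 * (t 1 / t j)^2)"
  proof -
    fix j assume "j \<in> {1..n}"
    hence j: "1 \<le> j" "j \<le> n" by auto
    have xj1: "x j \<le> x 1" using sdec_le[OF sd] j by auto
    define a where "a = z - x 0"
    define b where "b = z - x 1"
    define cc where "cc = z - x j"
    have a0: "0 < a" using z0 by (simp add: a_def)
    have ab: "a < b" using x10 by (simp add: a_def b_def)
    have bc: "b \<le> cc" using xj1 by (simp add: b_def cc_def)
    have eq: "v j / (v 0 - v 1) = (a / (b - a)) * (b / cc)"
      unfolding vd v_def using a0 ab bc by (simp add: a_def b_def cc_def field_simps)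
    have ba: "b - a = x 0 - x 1" by (simp add: a_def b_def)
    have f1: "a / (b - a) \<le> R0" unfolding R0_def ba[symmetric]
    proof (rule divide_right_mono)
      show "a \<le> 1 - x 0" using z1 by (simp add: a_def)
      show "0 \<le> b - a" using ab by simp
    qed
    have tjp: "0 < t j" using cfg_strict[OF c, of 0 j] rng[of 0] j by auto
    have xj1': "x j < 1" unfolding x_def using cos_monotone_0_pi[of 0 "t j"] tjp rng[of j] j by auto
    have f2: "b / cc \<le> (1 - x 1) / (1 - x j)"
    proof -
      have "b * (1 - x j) \<le> (1 - x 1) * cc"
      proof -
        have "x j * (1 - z) \<le> x 1 * (1 - z)" using xj1 z1 by (intro mult_right_mono) auto
        then show ?thesis by (simp add: b_def cc_def algebra_simps)
      qed
      moreover have "0 < cc" "0 < 1 - x j" using a0 ab bc xj1' by auto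
      ultimately show ?thesis by (simp add: divide_simps)
    qed
    have f3: "(1 - x 1) / (1 - x j) \<le> pi^2 / 4 * (t 1 / t j)^2"
    proof -
      have "1 - x 1 \<le> (t 1)^2 / 2" unfolding x_def by (rule one_minus_cos_le)
      moreover have "2 * (t j)^2 / pi^2 \<le> 1 - x j" unfolding x_def
        by (rule one_minus_cos_ge) (use rng[of j] j in auto)
      moreover have "0 \<le> 1 - x 1" using x10 z0 z1 by simp
      moreover have "0 < 2 * (t j)^2 / pi^2" using tjp by simp
      ultimately have "(1 - x 1) / (1 - x j) \<le> ((t 1)^2 / 2) / (2 * (t j)^2 / pi^2)"
        by (intro frac_le) auto
      also have "\<dots> = pi^2 / 4 * (t 1 / t j)^2" using tjp by (simp add: field_simps power2_eq_square)
      finally show ?thesis .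
    qed
    have "b / cc \<le> pi^2 / 4 * (t 1 / t j)^2" using f2 f3 by (rule order_trans)
    moreover have "0 \<le> a / (b - a)" using a0 ab by simp
    moreover have "0 \<le> b / cc" using a0 ab bc by simp
    ultimately show "v j / (v 0 - v 1) \<le> R0 * (pi^2 / 4 * (t 1 / t j)^2)"
      unfolding eq using f1 R00 by (intro mult_mono) auto
  qed
  have sq: "(\<Sum>j\<in>{1..n}. (t 1 / t j)^2) \<le> 2 * G"
  proof -
    have t1p: "0 < t 1" using t1 rng[of 0] u0 by simp
    have "(\<Sum>j\<in>{1..n}. (t 1 / t j)^2) \<le> (\<Sum>j\<in>{1..n}. (t 1)^2 * (1 / (t 1 + real (j - 1) * u)^2))"
    proof (rule sum_mono)
      fix j assume "j \<in> {1..n}"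
      hence j: "1 \<le> j" "j \<le> n" by auto
      have "real (j - 1) * u \<le> t j - t 1" using cfg_diff[OF c, of 1 j] j by simp
      hence le: "t 1 + real (j - 1) * u \<le> t j" by simp
      have p: "0 < t 1 + real (j - 1) * u" using t1p u0 by (simp add: add_pos_nonneg)
      have "(t 1 + real (j - 1) * u)^2 \<le> (t j)^2" using le p by (intro power_mono) auto
      hence "1 / (t j)^2 \<le> 1 / (t 1 + real (j - 1) * u)^2" using p by (intro frac_le) auto
      hence "(t 1)^2 * (1 / (t j)^2) \<le> (t 1)^2 * (1 / (t 1 + real (j - 1) * u)^2)"
        by (intro mult_left_mono) auto
      then show "(t 1 / t j)^2 \<le> (t 1)^2 * (1 / (t 1 + real (j - 1) * u)^2)"
        by (simp add: power_divide)
    qed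
    also have "\<dots> = (t 1)^2 * (\<Sum>j\<in>{1..n}. 1 / (t 1 + real (j - 1) * u)^2)"
      by (simp add: sum_distrib_left)
    also have "(\<Sum>j\<in>{1..n}. 1 / (t 1 + real (j - 1) * u)^2) = 1 / (t 1)^2 + (\<Sum>m\<in>{1..n - 1}. 1 / (t 1 + real m * u)^2)"
    proof -
      have "(\<Sum>j\<in>{1..n}. 1 / (t 1 + real (j - 1) * u)^2) = 1 / (t 1 + real (1 - 1) * u)^2 + (\<Sum>j\<in>{2..n}. 1 / (t 1 + real (j - 1) * u)^2)"
        using n3 by (simp add: sum.atLeast_Suc_atMost numeral_2_eq_2)
      moreover have "(\<Sum>j\<in>{2..n}. 1 / (t 1 + real (j - 1) * u)^2) = (\<Sum>m\<in>{1..n - 1}. 1 / (t 1 + real m * u)^2)"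
        by (rule sum.reindex_bij_witness[where i="\<lambda>m. m + 1" and j="\<lambda>j. j - 1"]) auto
      ultimately show ?thesis by simp
    qed
    also have "(t 1)^2 * (1 / (t 1)^2 + (\<Sum>m\<in>{1..n - 1}. 1 / (t 1 + real m * u)^2)) \<le> (t 1)^2 * (1 / (t 1)^2 + 1 / (t 1 * u))"
      using telescope_sq'[OF t1p u0, of "n - 1"] by (intro mult_left_mono add_left_mono) auto
    also have "\<dots> = 1 + t 1 / u" using t1p u0 by (simp add: field_simps power2_eq_square)
    also have "\<dots> \<le> 2 * G"
    proof -
      have "t 1 \<le> (2 * G - 1) * u" using t1 t0G by (simp add: algebra_simps)
      hence "t 1 / u \<le> 2 * G - 1" using u0 by (simp add: divide_simps)
      then show ?thesis by simp
    qed
    finally show ?thesis .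
  qed
  have "S / (v 0 - v 1) = (\<Sum>j\<in>{1..n}. v j / (v 0 - v 1))" unfolding S_def by (simp add: sum_divide_distrib)
  also have "\<dots> \<le> (\<Sum>j\<in>{1..n}. R0 * (pi^2 / 4 * (t 1 / t j)^2))" by (rule sum_mono) (rule tj)
  also have "\<dots> = R0 * (pi^2 / 4) * (\<Sum>j\<in>{1..n}. (t 1 / t j)^2)" by (simp add: sum_distrib_left mult.assoc)
  also have "\<dots> \<le> R0 * (pi^2 / 4) * (2 * G)" using sq R00 by (intro mult_left_mono) auto
  also have "\<dots> \<le> (pi^2 / 4 * (G - 1)^2) * (pi^2 / 4) * (2 * G)" using R0b G1 by (intro mult_right_mono) auto
  finally have "S / (v 0 - v 1) \<le> (pi^2 / 4 * (G - 1)^2) * (pi^2 / 4) * (2 * G)" .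
  hence "1 + 2 * (S / (v 0 - v 1)) \<le> 1 + 2 * ((pi^2 / 4 * (G - 1)^2) * (pi^2 / 4) * (2 * G))" by linarith
  also have "\<dots> = 1 + pi^4 / 4 * G * (G - 1)^2" by (simp add: power2_eq_square power4_eq_xxxx)
  finally show ?thesis using lam1 unfolding x_def z_def by simp
qed

definition Bd :: "real \<Rightarrow> real \<Rightarrow> real" where
  "Bd G L = (G * (G + 2) * pi^2 / 4 + 1) * (1 + pi^2 * G * L)"

lemma Bd_ge1: "1 \<le> G \<Longrightarrow> 0 \<le> L \<Longrightarrow> 1 \<le> Bd G L"
proof -
  assume a: "1 \<le> G" "0 \<le> L"
  have "1 \<le> G * (G + 2) * pi^2 / 4 + 1" using a by simp
  moreover have "1 \<le> 1 + pi^2 * G * L" using a by simp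
  ultimately have "1 * 1 \<le> (G * (G + 2) * pi^2 / 4 + 1) * (1 + pi^2 * G * L)"
    by (intro mult_mono) auto
  then show ?thesis by (simp add: Bd_def)
qed

lemma one_le_prod: "1 \<le> (G::real) \<Longrightarrow> 1 \<le> L \<Longrightarrow> 1 \<le> G * L"
  using mult_mono[of 1 G 1 L] by simp

lemma le_prod: "1 \<le> (G::real) \<Longrightarrow> 1 \<le> L \<Longrightarrow> G \<le> G * L \<and> L \<le> G * L"
  using mult_left_mono[of 1 L G] mult_right_mono[of 1 G L] by simp

lemma Bd_F1:
  assumes G: "1 \<le> G" and L: "1 \<le> L"
  shows "1 + pi^4 / 4 * G * (G - 1)^2 \<le> Bd G L"
proof -
  have P0: "0 \<le> G * (G + 2) * pi^2 / 4" using G by simp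
  have "Bd G L = G * (G + 2) * pi^2 / 4 * (1 + pi^2 * G * L) + (1 + pi^2 * G * L)"
    by (simp add: Bd_def algebra_simps)
  moreover have "1 \<le> 1 + pi^2 * G * L" using G L by simp
  moreover have "pi^4 / 4 * G * (G - 1)^2 \<le> G * (G + 2) * pi^2 / 4 * (1 + pi^2 * G * L)"
  proof -
    have "(G - 1)^2 \<le> G * (G + 2) * 1" using G by (simp add: power2_eq_square algebra_simps)
    also have "\<dots> \<le> G * (G + 2) * L" using G L by (intro mult_left_mono) auto
    finally have "(G - 1)^2 \<le> G * (G + 2) * L" .
    hence "pi^4 / 4 * G * (G - 1)^2 \<le> pi^4 / 4 * G * (G * (G + 2) * L)"
      using G by (intro mult_left_mono) auto
    also have "\<dots> \<le> pi^4 / 4 * G * (G * (G + 2) * L) + G * (G + 2) * pi^2 / 4"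
      using P0 by simp
    also have "\<dots> = G * (G + 2) * pi^2 / 4 * (1 + pi^2 * G * L)"
      by (simp add: field_simps power2_eq_square power4_eq_xxxx)
    finally show ?thesis .
  qed
  ultimately show ?thesis by linarith
qed

lemma Bd_F2:
  assumes G: "1 \<le> G" and L: "1 \<le> L"
  shows "1 + pi * (3 * G * (G + 2)^2 / 8) * (4 + 2 * L) \<le> Bd G L"
proof -
  have pi3: "3 \<le> pi" using pi_gt3 by simp
  have P0: "0 < G * (G + 2)" using G by simp
  have key: "3 * (G + 2) * (4 + 2 * L) \<le> 2 * pi * (1 + pi^2 * G * L)"
  proof -
    have GL: "1 \<le> G * L" "G \<le> G * L" "L \<le> G * L" using one_le_prod[OF G L] le_prod[OF G L] by auto
    have "3 * (G + 2) * (4 + 2 * L) = 12 * G + 24 + 6 * (G * L) + 12 * L" by (simp add: algebra_simps)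
    also have "\<dots> \<le> 6 + 54 * (G * L)" using GL by linarith
    also have "\<dots> \<le> 2 * pi * (1 + pi^2 * G * L)"
    proof -
      have "9 \<le> pi^2" using pi3 power_mono[of 3 pi 2] by simp
      hence "9 * (G * L) \<le> pi^2 * (G * L)" using GL by (intro mult_right_mono) auto
      hence "1 + 9 * (G * L) \<le> 1 + pi^2 * G * L" by (simp add: mult.assoc)
      moreover have "0 \<le> 1 + 9 * (G * L)" using GL by simp
      ultimately have "3 * (1 + 9 * (G * L)) \<le> pi * (1 + pi^2 * G * L)"
        using pi3 by (intro mult_mono) auto
      then show ?thesis by simp
    qed
    finally show ?thesis .
  qed
  have "pi * (3 * G * (G + 2)^2 / 8) * (4 + 2 * L) = (G * (G + 2)) * (pi / 8 * (3 * (G + 2) * (4 + 2 * L)))"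
    by (simp add: field_simps power2_eq_square)
  also have "\<dots> \<le> (G * (G + 2)) * (pi / 8 * (2 * pi * (1 + pi^2 * G * L)))"
    using key P0 by (intro mult_left_mono) auto
  also have "\<dots> = G * (G + 2) * pi^2 / 4 * (1 + pi^2 * G * L)" by (simp add: field_simps power2_eq_square)
  finally have a: "pi * (3 * G * (G + 2)^2 / 8) * (4 + 2 * L) \<le> G * (G + 2) * pi^2 / 4 * (1 + pi^2 * G * L)" .
  have "Bd G L = G * (G + 2) * pi^2 / 4 * (1 + pi^2 * G * L) + (1 + pi^2 * G * L)"
    by (simp add: Bd_def algebra_simps)
  moreover have "1 \<le> 1 + pi^2 * G * L" using G L by simp
  ultimately show ?thesis using a by linarith
qed

lemma ln_n_ge1: "3 \<le> n \<Longrightarrow> 1 \<le> ln (real n)"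
proof -
  assume n: "3 \<le> n"
  have "exp 1 \<le> (3::real)" by (rule exp_le)
  also have "\<dots> \<le> real n" using n by simp
  finally show ?thesis using ln_ge_iff[of "real n" 1] n by simp
qed

lemma harm_le_ln_n: "m \<le> n \<Longrightarrow> 1 \<le> n \<Longrightarrow> harm m \<le> 1 + ln (real n)"
proof -
  assume a: "m \<le> n" "1 \<le> n"
  show ?thesis
  proof (cases "m = 0")
    case True
    have "harm 0 = (0::real)" by (simp add: harm_def)
    moreover have "0 \<le> ln (real n)" using a by simp
    ultimately show ?thesis using True by simp
  next
    case False
    hence "harm m \<le> 1 + ln (real m)" by (intro harm_le_ln) simp
    moreover have "ln (real m) \<le> ln (real n)" using a False by simp
    ultimately show ?thesis by simp
  qed
qed

lemma core_bound:
  assumes c: "cfg t n u G" and z: "-1 \<le> z" "z \<le> 1"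
    and cs: "arccos z < t 0 \<or> (\<exists>k<n. t k < arccos z \<and> arccos z < t (Suc k) \<and> arccos z - t k \<le> t (Suc k) - arccos z)"
  shows "lamf (\<lambda>i. cos (t i)) n z \<le> Bd G (ln (real n))"
proof -
  have G1: "1 \<le> G" and n3: "3 \<le> n" using c unfolding cfg_def by auto
  have L1: "1 \<le> ln (real n)" using ln_n_ge1[OF n3] .
  have cz: "cos (arccos z) = z" using z by simp
  have a0: "0 \<le> arccos z" using arccos_lbound[OF z] .
  from cs show ?thesis
  proof
    assume "arccos z < t 0"
    then have "lamf (\<lambda>i. cos (t i)) n (cos (arccos z)) \<le> 1 + pi^4 / 4 * G * (G - 1)^2"
      using caseO[OF c a0] by simp
    then show ?thesis using Bd_F1[OF G1 L1] cz by simp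
  next
    assume "\<exists>k<n. t k < arccos z \<and> arccos z < t (Suc k) \<and> arccos z - t k \<le> t (Suc k) - arccos z"
    then obtain k where k: "k < n" "t k < arccos z" "arccos z < t (Suc k)" "arccos z - t k \<le> t (Suc k) - arccos z"
      by blast
    have "lamf (\<lambda>i. cos (t i)) n (cos (arccos z)) \<le> 1 + pi * (3 * G * (G + 2)^2 / 8) * (2 + harm k + harm (n - Suc k))"
      by (rule caseI[OF c k])
    moreover have "2 + harm k + harm (n - Suc k) \<le> 4 + 2 * ln (real n)"
      using harm_le_ln_n[of k n] harm_le_ln_n[of "n - Suc k" n] k n3 by simp
    moreover have "0 \<le> pi * (3 * G * (G + 2)^2 / 8)" using G1 by simp
    ultimately have "lamf (\<lambda>i. cos (t i)) n z \<le> 1 + pi * (3 * G * (G + 2)^2 / 8) * (4 + 2 * ln (real n))"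
      using cz by (smt (verit, best) mult_left_mono)
    then show ?thesis using Bd_F2[OF G1 L1] by simp
  qed
qed

lemma lam_main:
  assumes c: "cfg t n u G" and z: "-1 \<le> z" "z \<le> 1"
  shows "lamf (\<lambda>i. cos (t i)) n z \<le> Bd G (ln (real n))"
proof (cases "\<exists>i\<le>n. z = cos (t i)")
  case True
  have G1: "1 \<le> G" and n3: "3 \<le> n" using c unfolding cfg_def by auto
  from True obtain j where "j \<le> n" "z = cos (t j)" by auto
  then have "lamf (\<lambda>i. cos (t i)) n z = 1" using lam_node[OF cfg_sdec[OF c]] by auto
  moreover have "1 \<le> Bd G (ln (real n))" using Bd_ge1[OF G1] n3 by simp
  ultimately show ?thesis by simp
next
  case False
  define phi where "phi = arccos z"
  have cz: "cos phi = z" using z by (simp add: phi_def)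
  have prng: "0 \<le> phi" "phi \<le> pi" using arccos_bounded[OF z] by (auto simp: phi_def)
  have neq: "\<And>i. i \<le> n \<Longrightarrow> phi \<noteq> t i" using False cz by auto
  define t' where "t' = (\<lambda>i. pi - t (n - i))"
  have c': "cfg t' n u G" unfolding t'_def by (rule cfg_refl[OF c])
  have refl: "lamf (\<lambda>i. cos (t' i)) n (-z) = lamf (\<lambda>i. cos (t i)) n z"
    using lamf_reflx[of "\<lambda>i. cos (t i)" n z] by (simp add: reflx_cos t'_def)
  have ac': "arccos (-z) = pi - phi" using arccos_minus[OF z] by (simp add: phi_def)
  have z': "-1 \<le> -z" "-z \<le> 1" using z by auto
  have n0: "0 < n" using c unfolding cfg_def by auto
  show ?thesis
  proof (cases "phi < t 0")
    case True
    then show ?thesis using core_bound[OF c z] by (simp add: phi_def)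
  next
    case F0: False
    show ?thesis
    proof (cases "t n < phi")
      case True
      have "arccos (-z) < t' 0" using True ac' by (simp add: t'_def)
      then have "lamf (\<lambda>i. cos (t' i)) n (-z) \<le> Bd G (ln (real n))" using core_bound[OF c' z'] by simp
      then show ?thesis using refl by simp
    next
      case F1: False
      have t0: "t 0 < phi" using F0 neq[of 0] by auto
      have tn: "phi < t n" using F1 neq[of n] by auto
      define S where "S = {i. i \<le> n \<and> t i < phi}"
      have fin: "finite S" unfolding S_def by auto
      have ne: "0 \<in> S" using t0 unfolding S_def by auto
      define k where "k = Max S"
      have kS: "k \<in> S" unfolding k_def using fin ne by (intro Max_in) auto
      have kn: "k < n" using kS tn unfolding S_def by (cases "k = n") auto
      have tk: "t k < phi" using kS unfolding S_def by auto
      have tk1: "phi < t (Suc k)"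
      proof -
        have "Suc k \<notin> S" using Max_ge[OF fin, of "Suc k"] unfolding k_def by auto
        hence "phi \<le> t (Suc k)" using kn unfolding S_def by auto
        moreover have "phi \<noteq> t (Suc k)" using neq[of "Suc k"] kn by auto
        ultimately show ?thesis by auto
      qed
      show ?thesis
      proof (cases "phi - t k \<le> t (Suc k) - phi")
        case True
        have "arccos z < t 0 \<or> (\<exists>k<n. t k < arccos z \<and> arccos z < t (Suc k) \<and> arccos z - t k \<le> t (Suc k) - arccos z)"
          unfolding phi_def[symmetric] using kn tk tk1 True by blast
        then show ?thesis using core_bound[OF c z] by blast
      next
        case False
        define k' where "k' = n - Suc k"
        have k'n: "k' < n" using kn by (simp add: k'_def)
        have e1: "t' k' = pi - t (Suc k)" using kn by (simp add: t'_def k'_def)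
        have e2: "t' (Suc k') = pi - t k" using kn by (simp add: t'_def k'_def Suc_diff_Suc)
        have "\<exists>k<n. t' k < arccos (-z) \<and> arccos (-z) < t' (Suc k) \<and> arccos (-z) - t' k \<le> t' (Suc k) - arccos (-z)"
          using k'n e1 e2 ac' tk tk1 False by (intro exI[of _ k']) auto
        then have "lamf (\<lambda>i. cos (t' i)) n (-z) \<le> Bd G (ln (real n))" using core_bound[OF c' z'] by blast
        then show ?thesis using refl by simp
      qed
    qed
  qed
qed

definition Pn :: "(nat \<Rightarrow> real) \<Rightarrow> nat \<Rightarrow> (nat \<Rightarrow> real) \<Rightarrow> real poly" where
  "Pn x n y = (\<Sum>i\<le>n. smult ((-1)^i * y i) (\<Prod>k\<in>{..n} - {i}. [:- x k, 1:]))"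

lemma poly_Pn: "poly (Pn x n y) z = (\<Sum>i\<le>n. (-1)^i * y i * (\<Prod>k\<in>{..n} - {i}. (z - x k)))"
  unfolding Pn_def by (simp add: poly_sum poly_prod)

lemma degree_Pn: "degree (Pn x n y) \<le> n"
  unfolding Pn_def
proof (rule degree_sum_le)
  fix i assume i: "i \<in> {..n}"
  have "degree (\<Prod>k\<in>{..n} - {i}. [:- x k, 1:]) \<le> (\<Sum>k\<in>{..n} - {i}. (degree \<circ> (\<lambda>k. [:- x k, 1:])) k)"
    by (rule degree_prod_sum_le) simp
  also have "\<dots> = card ({..n} - {i})" by simp
  also have "\<dots> = n" using i by simp
  finally show "degree (smult ((-1)^i * y i) (\<Prod>k\<in>{..n} - {i}. [:- x k, 1:])) \<le> n"
    using degree_smult_le order_trans by blast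
qed simp

lemma prod_node_zero:
  fixes x :: "nat \<Rightarrow> real"
  assumes "j \<le> n" "i \<le> n" "i \<noteq> j"
  shows "(\<Prod>k\<in>{..n} - {i}. (x j - x k)) = (0::real)"
  using assms by (intro prod_zero) auto

lemma prod_node_nz:
  assumes "sdec x n" "j \<le> n"
  shows "(\<Prod>k\<in>{..n} - {j}. (x j - x k)) \<noteq> (0::real)"
  using assms sdec_inj[OF assms(1)] by (auto simp: prod_zero_iff)

lemma Pn_node:
  assumes "j \<le> n"
  shows "poly (Pn x n y) (x j) = (-1)^j * y j * (\<Prod>k\<in>{..n} - {j}. (x j - x k))"
proof -
  have "poly (Pn x n y) (x j) = (\<Sum>i\<le>n. if i = j then (-1)^j * y j * (\<Prod>k\<in>{..n} - {j}. (x j - x k)) else 0)"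
    unfolding poly_Pn using prod_node_zero[OF assms] by (intro sum.cong) auto
  also have "\<dots> = (-1)^j * y j * (\<Prod>k\<in>{..n} - {j}. (x j - x k))" using assms by simp
  finally show ?thesis .
qed

lemma denom_node:
  assumes "j \<le> n"
  shows "berrut_denom x n (x j) = (-1)^j * (\<Prod>k\<in>{..n} - {j}. (x j - x k))"
proof -
  have "berrut_denom x n (x j) = (\<Sum>i\<le>n. if i = j then (-1)^j * (\<Prod>k\<in>{..n} - {j}. (x j - x k)) else 0)"
    unfolding berrut_denom_def using prod_node_zero[OF assms] by (intro sum.cong) auto
  also have "\<dots> = (-1)^j * (\<Prod>k\<in>{..n} - {j}. (x j - x k))" using assms by simp
  finally show ?thesis .
qed

lemma denom_node_nz: "sdec x n \<Longrightarrow> j \<le> n \<Longrightarrow> berrut_denom x n (x j) \<noteq> 0"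
  using denom_node[of j n x] prod_node_nz[of x n j] by simp

lemma Pn_ratio_node:
  assumes "sdec x n" "j \<le> n"
  shows "poly (Pn x n y) (x j) / berrut_denom x n (x j) = y j"
  using Pn_node[OF assms(2)] denom_node[OF assms(2)] prod_node_nz[OF assms] by simp

lemma Pn_unique:
  assumes sd: "sdec x n" and deg: "degree p \<le> n"
    and eq: "\<And>j. j \<le> n \<Longrightarrow> poly p (x j) = poly (Pn x n y) (x j)"
  shows "p = Pn x n y"
proof (rule ccontr)
  assume ne: "p \<noteq> Pn x n y"
  define d where "d = p - Pn x n y"
  have d0: "d \<noteq> 0" using ne by (simp add: d_def)
  have "x ` {..n} \<subseteq> {z. poly d z = 0}" using eq by (auto simp: d_def)
  moreover have "card (x ` {..n}) = n + 1"
  proof -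
    have "inj_on x {..n}" unfolding inj_on_def using sdec_inj[OF sd] by auto
    then show ?thesis by (simp add: card_image)
  qed
  moreover have "finite {z. poly d z = 0}" using d0 by (rule poly_roots_finite)
  ultimately have "n + 1 \<le> card {z. poly d z = 0}" by (metis card_mono)
  also have "\<dots> \<le> degree d" using d0 by (rule card_poly_roots_bound)
  also have "\<dots> \<le> n" unfolding d_def using deg degree_Pn[of x n y]
    by (metis degree_diff_le le_trans max.bounded_iff)
  finally show False by simp
qed

lemma berrut_node:
  assumes "sdec x n" "j \<le> n"
  shows "berrut x n y (x j) = y j"
proof -
  have "berrut x n y (x j) = (\<Sum>i\<le>n. if i = j then y j else 0)"
    unfolding berrut_def berrut_basis_def using assms sdec_inj[OF assms(1)]
    by (intro sum.cong) auto
  then show ?thesis using assms by simp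
qed

lemma berrut_off:
  assumes nn: "\<not> (\<exists>k\<le>n. z = x k)"
  shows "berrut x n y z = poly (Pn x n y) z / berrut_denom x n z"
proof -
  define L where "L = (\<Prod>k\<le>n. (z - x k))"
  have nz: "\<And>k. k \<le> n \<Longrightarrow> z - x k \<noteq> 0" using nn by auto
  have L0: "L \<noteq> 0" unfolding L_def using nz by (auto simp: prod_zero_iff)
  have rem: "\<And>i. i \<le> n \<Longrightarrow> (\<Prod>k\<in>{..n} - {i}. (z - x k)) = L / (z - x i)"
  proof -
    fix i assume i: "i \<le> n"
    have "L = (z - x i) * (\<Prod>k\<in>{..n} - {i}. (z - x k))" unfolding L_def using i
      by (intro prod.remove) auto
    then show "(\<Prod>k\<in>{..n} - {i}. (z - x k)) = L / (z - x i)" using nz[OF i] by (simp add: field_simps)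
  qed
  have pP: "poly (Pn x n y) z = L * (\<Sum>i\<le>n. (-1)^i * y i / (z - x i))"
    unfolding poly_Pn sum_distrib_left by (intro sum.cong) (auto simp: rem)
  have pD: "berrut_denom x n z = L * Dn x n z"
    unfolding berrut_denom_def Dn_def sum_distrib_left by (intro sum.cong) (auto simp: rem)
  have "berrut x n y z = (\<Sum>i\<le>n. (-1)^i * y i / (z - x i)) / Dn x n z"
    unfolding berrut_def berrut_basis_def Dn_def using nn
    by (simp add: sum_divide_distrib) (intro sum.cong, auto)
  also have "\<dots> = poly (Pn x n y) z / berrut_denom x n z" using L0 by (simp add: pP pD)
  finally show ?thesis .
qed

lemma Pn_ratio_eq_berrut:
  assumes "sdec x n"
  shows "poly (Pn x n y) z / berrut_denom x n z = berrut x n y z"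
proof (cases "\<exists>k\<le>n. z = x k")
  case True
  then obtain j where "j \<le> n" "z = x j" by auto
  then show ?thesis using Pn_ratio_node[OF assms] berrut_node[OF assms] by simp
next
  case False then show ?thesis using berrut_off by simp
qed

lemma sorted_idx_less:
  assumes "sorted_wrt (<) (xs :: nat list)" "i < length xs" "j < length xs" "xs ! i < xs ! j"
  shows "i < j"
proof (rule ccontr)
  assume "\<not> i < j"
  hence "j \<le> i" by simp
  then show False
  proof (cases "j = i")
    case True then show False using assms by simp
  next
    case False
    hence "xs ! j < xs ! i" using sorted_wrt_nth_less[OF assms(1)] \<open>j \<le> i\<close> assms by simp
    then show False using assms by simp
  qed
qed

lemma nodes_cfg:
  fixes N s :: nat and F :: "nat set"
  assumes sN: "s + 2 < N" and FN: "F \<subseteq> {0..N}" and cF: "card F = N + 1 - s"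
  shows "cfg (\<lambda>i. real (sorted_list_of_set F ! i) * pi / real N) (N - s) (pi / real N) (real (s + 1))"
proof -
  define xs where "xs = sorted_list_of_set F"
  define n where "n = N - s"
  have fin: "finite F" using FN finite_subset by blast
  have len: "length xs = n + 1" unfolding xs_def n_def using cF fin sN by simp
  have st: "sorted_wrt (<) xs" unfolding xs_def by simp
  have setx: "set xs = F" unfolding xs_def using fin by simp
  have inF: "\<And>i. i < length xs \<Longrightarrow> xs ! i \<in> F" using setx nth_mem by blast
  have leN: "\<And>i. i < length xs \<Longrightarrow> xs ! i \<le> N"
  proof -
    fix i assume "i < length xs"
    then have "xs ! i \<in> {0..N}" using inF FN by blast
    then show "xs ! i \<le> N" by simp
  qed
  have mono: "\<And>i j. i < j \<Longrightarrow> j < length xs \<Longrightarrow> xs ! i < xs ! j" using sorted_wrt_nth_less[OF st] by auto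
  have fromF: "\<And>y. y \<in> F \<Longrightarrow> \<exists>j<length xs. xs ! j = y" using setx by (metis in_set_conv_nth)
  define C where "C = {0..N} - F"
  have cC: "card C = s" unfolding C_def using FN cF sN by (simp add: card_Diff_subset fin)
  have finC: "finite C" unfolding C_def by simp
  have subC: "\<And>A. A \<subseteq> C \<Longrightarrow> card A \<le> s" using cC finC by (metis card_mono)
  have first: "xs ! 0 \<le> s"
  proof -
    have "{0..<xs ! 0} \<subseteq> C"
    proof
      fix y assume y: "y \<in> {0..<xs ! 0}"
      have "y \<notin> F"
      proof
        assume "y \<in> F"
        then obtain j where j: "j < length xs" "xs ! j = y" using fromF by blast
        hence "j < 0" using sorted_idx_less[OF st j(1), of 0] y len by simp
        then show False by simp
      qed
      moreover have "y \<le> N" using y leN[of 0] len by simp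
      ultimately show "y \<in> C" unfolding C_def by simp
    qed
    from subC[OF this] show ?thesis by simp
  qed
  have last: "N - xs ! n \<le> s"
  proof -
    have "{Suc (xs ! n)..N} \<subseteq> C"
    proof
      fix y assume y: "y \<in> {Suc (xs ! n)..N}"
      have "y \<notin> F"
      proof
        assume "y \<in> F"
        then obtain j where j: "j < length xs" "xs ! j = y" using fromF by blast
        hence "n < j" using sorted_idx_less[OF st _ j(1), of n] y len by simp
        then show False using j len by simp
      qed
      then show "y \<in> C" unfolding C_def using y by simp
    qed
    from subC[OF this] show ?thesis by simp
  qed
  have gap: "\<And>i. i < n \<Longrightarrow> xs ! i < xs ! Suc i \<and> xs ! Suc i - xs ! i \<le> s + 1"
  proof -
    fix i assume i: "i < n"
    have lt: "xs ! i < xs ! Suc i" using mono[of i "Suc i"] i len by simp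
    have "{Suc (xs ! i)..<xs ! Suc i} \<subseteq> C"
    proof
      fix y assume y: "y \<in> {Suc (xs ! i)..<xs ! Suc i}"
      have "y \<notin> F"
      proof
        assume "y \<in> F"
        then obtain j where j: "j < length xs" "xs ! j = y" using fromF by blast
        have "i < j" using sorted_idx_less[OF st _ j(1), of i] y len i j(2) by simp
        moreover have "j < Suc i" using sorted_idx_less[OF st j(1), of "Suc i"] y len i j(2) by simp
        ultimately show False by simp
      qed
      moreover have "y \<le> N" using y leN[of "Suc i"] len i by simp
      ultimately show "y \<in> C" unfolding C_def by simp
    qed
    from subC[OF this] have "xs ! Suc i - Suc (xs ! i) \<le> s" by simp
    then show "xs ! i < xs ! Suc i \<and> xs ! Suc i - xs ! i \<le> s + 1" using lt by simp
  qed
  have N0: "0 < real N" using sN by simp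
  define u where "u = pi / real N"
  have u0: "0 < u" using N0 by (simp add: u_def)
  have tform: "\<And>i. real (xs ! i) * pi / real N = real (xs ! i) * u" by (simp add: u_def)
  show ?thesis
    unfolding xs_def[symmetric] n_def[symmetric] u_def[symmetric] cfg_def tform
  proof (intro conjI allI impI)
    show "0 < u" by (rule u0)
    show "1 \<le> real (s + 1)" by simp
    show "real (s + 1) * u < pi"
    proof -
      have "real (s + 1) < real N" using sN by simp
      hence "real (s + 1) * pi < real N * pi" by (rule mult_strict_right_mono) simp
      then show ?thesis using N0 by (simp add: u_def divide_simps)
    qed
    show "3 \<le> n" using sN by (simp add: n_def)
    show "0 \<le> real (xs ! 0) * u" using u0 by simp
    show "real (xs ! n) * u \<le> pi" using leN[of n] len N0 by (simp add: u_def field_simps)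
    show "real (xs ! 0) * u \<le> (real (s + 1) - 1) * u" using first u0 by simp
    show "pi - real (xs ! n) * u \<le> (real (s + 1) - 1) * u"
    proof -
      have "real N - real (xs ! n) \<le> real s" using last leN[of n] len by simp
      hence "(real N - real (xs ! n)) * u \<le> real s * u" using u0 by (intro mult_right_mono) auto
      moreover have "real N * u = pi" using N0 by (simp add: u_def)
      ultimately show ?thesis by (simp add: algebra_simps)
    qed
    fix i assume i: "i < n"
    have g: "xs ! i < xs ! Suc i" "xs ! Suc i - xs ! i \<le> s + 1" using gap[OF i] by auto
    have e: "real (xs ! Suc i) * u - real (xs ! i) * u = real (xs ! Suc i - xs ! i) * u"
      using g by (simp add: of_nat_diff algebra_simps)
    have "1 \<le> xs ! Suc i - xs ! i" using g by simp
    hence "1 * u \<le> real (xs ! Suc i - xs ! i) * u" using u0 by (intro mult_right_mono) auto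
    then show "u \<le> real (xs ! Suc i) * u - real (xs ! i) * u" using e by simp
    have "real (xs ! Suc i - xs ! i) * u \<le> real (s + 1) * u" using g u0 by (intro mult_right_mono) auto
    then show "real (xs ! Suc i) * u - real (xs ! i) * u \<le> real (s + 1) * u" using e by simp
  qed
qed

lemma gap_exists:
  assumes "sdec x n"
  shows "\<exists>h. 0 < h \<and> h \<le> 2 \<and> (\<forall>i<n. h \<le> x i - x (Suc i))"
proof (cases "n = 0")
  case True then show ?thesis by (intro exI[of _ 2]) auto
next
  case False
  define M where "M = Min ((\<lambda>i. x i - x (Suc i)) ` {..<n})"
  have fin: "finite ((\<lambda>i. x i - x (Suc i)) ` {..<n})" by simp
  have ne: "(\<lambda>i. x i - x (Suc i)) ` {..<n} \<noteq> {}" using False by auto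
  have pos: "0 < M" unfolding M_def using fin ne assms unfolding sdec_def
    by (subst Min_gr_iff) auto
  have le: "\<And>i. i < n \<Longrightarrow> M \<le> x i - x (Suc i)" unfolding M_def using fin by (intro Min_le) auto
  have "\<forall>i<n. min 2 M \<le> x i - x (Suc i)" using le by (meson min.coboundedI2)
  then show ?thesis using pos by (intro exI[of _ "min 2 M"]) auto
qed

lemma alpha_sdec:
  assumes K: "1 \<le> K"
  shows "sdec (\<lambda>i. cos ((2 * real i + 1) * pi / (2 * real K))) (K - 1)"
  unfolding sdec_def
proof (intro allI impI)
  fix i j :: nat assume ij: "i < j" "j \<le> K - 1"
  have K0: "0 < real K" using K by simp
  have a: "(2 * real i + 1) * pi / (2 * real K) < (2 * real j + 1) * pi / (2 * real K)"
    using ij K0 by (intro divide_strict_right_mono mult_strict_right_mono) auto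
  have b: "0 \<le> (2 * real i + 1) * pi / (2 * real K)" using K0 by simp
  have "2 * real j + 1 \<le> 2 * real K" using ij K by linarith
  hence "(2 * real j + 1) * pi \<le> (2 * real K) * pi" by (rule mult_right_mono) simp
  hence c: "(2 * real j + 1) * pi / (2 * real K) \<le> pi" using K0 by (simp add: divide_simps)
  show "cos ((2 * real j + 1) * pi / (2 * real K)) < cos ((2 * real i + 1) * pi / (2 * real K))"
    using cos_monotone_0_pi[OF b a c] .
qed

lemma alpha_bounded:
  assumes K: "1 \<le> K"
  shows "\<exists>M. \<forall>z\<in>{-1..1}. \<bar>berrut (\<lambda>i. cos ((2 * real i + 1) * pi / (2 * real K))) (K - 1) X z\<bar> \<le> M"
proof -
  define a where "a = (\<lambda>i. cos ((2 * real i + 1) * pi / (2 * real K)))"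
  have sd: "sdec a (K - 1)" unfolding a_def by (rule alpha_sdec[OF K])
  obtain h where h: "0 < h" "h \<le> 2" "\<forall>i<K - 1. h \<le> a i - a (Suc i)" using gap_exists[OF sd] by blast
  have rng: "\<And>i. -1 \<le> a i \<and> a i \<le> 1" unfolding a_def by simp
  have "\<exists>M. \<forall>z\<in>{-1..1}. \<bar>berrut a (K - 1) X z\<bar> \<le> M"
  proof (intro exI ballI)
    fix z :: real assume z: "z \<in> {-1..1}"
    have "lamf a (K - 1) z \<le> 2 * (real (K - 1) + 1) / h"
      by (rule lam_crude[OF sd]) (use rng h z in auto)
    moreover have "0 \<le> (\<Sum>i\<le>K - 1. \<bar>X i\<bar>)" by (simp add: sum_nonneg)
    ultimately have "lamf a (K - 1) z * (\<Sum>i\<le>K - 1. \<bar>X i\<bar>) \<le> 2 * (real (K - 1) + 1) / h * (\<Sum>i\<le>K - 1. \<bar>X i\<bar>)"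
      by (rule mult_right_mono)
    then show "\<bar>berrut a (K - 1) X z\<bar> \<le> 2 * (real (K - 1) + 1) / h * (\<Sum>i\<le>K - 1. \<bar>X i\<bar>)"
      using berrut_abs_le[of a "K - 1" X z] by linarith
  qed
  then show ?thesis by (simp add: a_def)
qed

theorem corollary1:
  fixes K N s :: nat and X :: "nat \<Rightarrow> real" and f :: "real \<Rightarrow> real" and F :: "nat set"
  assumes "K \<ge> 1" and "s + 2 < N"
    and "continuous_on UNIV f"
    and "F \<subseteq> {0..N}" and "card F = N + 1 - s"
  defines "g \<equiv> (\<lambda>z. f (berrut (\<lambda>i. cos ((2 * real i + 1) * pi / (2 * real K))) (K - 1) X z))"
    and "zs \<equiv> (\<lambda>i. cos (real (sorted_list_of_set F ! i) * pi / real N))"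
  defines "Q \<equiv> {r :: real \<Rightarrow> real. \<exists>p :: real poly. degree p \<le> N - s
              \<and> (\<forall>z. r z = poly p z / berrut_denom zs (N - s) z)
              \<and> (\<forall>j\<le>N - s. r (zs j) = g (zs j))}"
  shows "Sup ((\<lambda>z. \<bar>berrut zs (N - s) (\<lambda>i. g (zs i)) z - g z\<bar>) ` {-1..1})
           \<le> (1 + lebesgue_const zs (N - s)) * (INF r\<in>Q. Sup ((\<lambda>z. \<bar>g z - r z\<bar>) ` {-1..1}))
         \<and> lebesgue_const zs (N - s)
           \<le> ((real (s + 1) * real (s + 3) * pi ^ 2 / 4 + 1)
               * (1 + pi ^ 2 * real (s + 1) * ln (real N - real s)))"
proof -
  define tt where "tt = (\<lambda>i. real (sorted_list_of_set F ! i) * pi / real N)"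
  define G where "G = real (s + 1)"
  have c: "cfg tt (N - s) (pi / real N) G" unfolding tt_def G_def by (rule nodes_cfg[OF assms(2,4,5)])
  have zs_eq: "zs = (\<lambda>i. cos (tt i))" unfolding zs_def tt_def by simp
  have sd: "sdec zs (N - s)" using cfg_sdec[OF c] zs_eq by simp
  define B where "B = Bd G (ln (real (N - s)))"
  have lam_le: "\<And>z. z \<in> {-1..1} \<Longrightarrow> lamf zs (N - s) z \<le> B"
    unfolding B_def zs_eq using lam_main[OF c] by auto
  have B_eq: "B = ((real (s + 1) * real (s + 3) * pi ^ 2 / 4 + 1) * (1 + pi ^ 2 * real (s + 1) * ln (real N - real s)))"
  proof -
    have "real (N - s) = real N - real s" using assms(2) by (simp add: of_nat_diff)
    moreover have "G + 2 = real (s + 3)" by (simp add: G_def)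
    ultimately show ?thesis unfolding B_def Bd_def G_def by simp
  qed
  have LC: "lebesgue_const zs (N - s) = Sup (lamf zs (N - s) ` {-1..1})"
    unfolding lebesgue_const_def lamf_def by simp
  have bddL: "bdd_above (lamf zs (N - s) ` {-1..1})" using lam_le by (intro bdd_aboveI2) auto
  have part2: "lebesgue_const zs (N - s) \<le> B" unfolding LC
    by (rule cSup_least) (use lam_le in auto)
  have Lnn: "0 \<le> lebesgue_const zs (N - s)"
  proof -
    have "lamf zs (N - s) 0 \<le> Sup (lamf zs (N - s) ` {-1..1})"
      by (rule cSup_upper[OF _ bddL]) auto
    then show ?thesis using lamf_nonneg[of zs "N - s" 0] LC by simp
  qed
  obtain Mu where Mu: "\<And>z. z \<in> {-1..1} \<Longrightarrow> \<bar>berrut (\<lambda>i. cos ((2 * real i + 1) * pi / (2 * real K))) (K - 1) X z\<bar> \<le> Mu"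
    using alpha_bounded[OF assms(1), of X] by blast
  have "continuous_on (cball 0 Mu) f" using assms(3) continuous_on_subset by blast
  then have "compact (f ` cball 0 Mu)" by (rule compact_continuous_image) simp
  then have "bounded (f ` cball 0 Mu)" by (rule compact_imp_bounded)
  then obtain Bf where Bf: "\<And>y. y \<in> f ` cball 0 Mu \<Longrightarrow> norm y \<le> Bf" unfolding bounded_iff by blast
  have gb: "\<And>z. z \<in> {-1..1} \<Longrightarrow> \<bar>g z\<bar> \<le> Bf"
  proof -
    fix z :: real assume z: "z \<in> {-1..1}"
    have "berrut (\<lambda>i. cos ((2 * real i + 1) * pi / (2 * real K))) (K - 1) X z \<in> cball 0 Mu"
      using Mu[OF z] by simp
    then show "\<bar>g z\<bar> \<le> Bf" unfolding g_def using Bf by auto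
  qed
  define rF where "rF = berrut zs (N - s) (\<lambda>i. g (zs i))"
  define SG where "SG = (\<Sum>i\<le>N - s. \<bar>g (zs i)\<bar>)"
  have SG0: "0 \<le> SG" unfolding SG_def by (simp add: sum_nonneg)
  have rFb: "\<And>z. z \<in> {-1..1} \<Longrightarrow> \<bar>rF z\<bar> \<le> B * SG"
  proof -
    fix z :: real assume z: "z \<in> {-1..1}"
    have "\<bar>rF z\<bar> \<le> lamf zs (N - s) z * SG" unfolding rF_def SG_def by (rule berrut_abs_le)
    also have "\<dots> \<le> B * SG" using lam_le[OF z] SG0 by (rule mult_right_mono)
    finally show "\<bar>rF z\<bar> \<le> B * SG" .
  qed
  have bddE: "bdd_above ((\<lambda>z. \<bar>rF z - g z\<bar>) ` {-1..1})"
  proof (rule bdd_aboveI2)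
    fix z :: real assume z: "z \<in> {-1..1}"
    have "\<bar>rF z - g z\<bar> \<le> \<bar>rF z\<bar> + \<bar>g z\<bar>" by (rule abs_triangle_ineq4)
    then show "\<bar>rF z - g z\<bar> \<le> B * SG + Bf" using rFb[OF z] gb[OF z] by linarith
  qed
  define E where "E = Sup ((\<lambda>z. \<bar>rF z - g z\<bar>) ` {-1..1})"
  have E0: "0 \<le> E"
  proof -
    have "\<bar>rF 0 - g 0\<bar> \<le> E" unfolding E_def by (rule cSup_upper[OF _ bddE]) auto
    then show ?thesis by linarith
  qed
  \<comment> \<open>the set Q consists of the single function rF\<close>
  define p0 where "p0 = Pn zs (N - s) (\<lambda>i. g (zs i))"
  define r0 where "r0 = (\<lambda>z. poly p0 z / berrut_denom zs (N - s) z)"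
  have r0Q: "r0 \<in> Q" unfolding Q_def
  proof (intro CollectI exI conjI allI impI)
    show "degree p0 \<le> N - s" unfolding p0_def by (rule degree_Pn)
    show "\<And>z. r0 z = poly p0 z / berrut_denom zs (N - s) z" by (simp add: r0_def)
    show "\<And>j. j \<le> N - s \<Longrightarrow> r0 (zs j) = g (zs j)"
      unfolding r0_def p0_def using Pn_ratio_node[OF sd] by simp
  qed
  have QrF: "\<And>r z. r \<in> Q \<Longrightarrow> r z = rF z"
  proof -
    fix r z assume "r \<in> Q"
    then obtain p where deg: "degree p \<le> N - s" and rp: "\<And>z. r z = poly p z / berrut_denom zs (N - s) z"
      and ip: "\<And>j. j \<le> N - s \<Longrightarrow> r (zs j) = g (zs j)" unfolding Q_def by blast
    have "p = p0" unfolding p0_def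
    proof (rule Pn_unique[OF sd deg])
      fix j assume j: "j \<le> N - s"
      have q0: "berrut_denom zs (N - s) (zs j) \<noteq> 0" by (rule denom_node_nz[OF sd j])
      have "poly p (zs j) / berrut_denom zs (N - s) (zs j) = g (zs j)" using rp[of "zs j"] ip[OF j] by simp
      moreover have "poly (Pn zs (N - s) (\<lambda>i. g (zs i))) (zs j) / berrut_denom zs (N - s) (zs j) = g (zs j)"
        using Pn_ratio_node[OF sd j] by simp
      ultimately show "poly p (zs j) = poly (Pn zs (N - s) (\<lambda>i. g (zs i))) (zs j)"
        using q0 by (simp add: divide_eq_eq)
    qed
    then show "r z = rF z" unfolding rF_def using rp[of z] Pn_ratio_eq_berrut[OF sd] by (simp add: p0_def)
  qed
  have img: "(\<lambda>r. Sup ((\<lambda>z. \<bar>g z - r z\<bar>) ` {-1..1})) ` Q = {E}"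
  proof -
    have "\<And>r. r \<in> Q \<Longrightarrow> Sup ((\<lambda>z. \<bar>g z - r z\<bar>) ` {-1..1}) = E"
    proof -
      fix r assume r: "r \<in> Q"
      have eqf: "(\<lambda>z. \<bar>g z - r z\<bar>) = (\<lambda>z. \<bar>rF z - g z\<bar>)" using QrF[OF r] by (auto simp: abs_minus_commute)
      show "Sup ((\<lambda>z. \<bar>g z - r z\<bar>) ` {-1..1}) = E" unfolding E_def eqf by (rule refl)
    qed
    then show ?thesis using r0Q by blast
  qed
  have INFeq: "(INF r\<in>Q. Sup ((\<lambda>z. \<bar>g z - r z\<bar>) ` {-1..1})) = E" unfolding img by simp
  have part1: "Sup ((\<lambda>z. \<bar>berrut zs (N - s) (\<lambda>i. g (zs i)) z - g z\<bar>) ` {-1..1})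
           \<le> (1 + lebesgue_const zs (N - s)) * (INF r\<in>Q. Sup ((\<lambda>z. \<bar>g z - r z\<bar>) ` {-1..1}))"
  proof -
    have "0 \<le> lebesgue_const zs (N - s) * E" using Lnn E0 by simp
    then have "E \<le> (1 + lebesgue_const zs (N - s)) * E" by (simp add: algebra_simps)
    then show ?thesis unfolding INFeq by (simp add: E_def rF_def)
  qed
  show ?thesis using part1 part2 B_eq by simp
qed

end
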